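(* Let $n\ge 1$ and consider the system of ODEs $$\dot z_k=\gamma_k z_k-\beta_k z_k|z_k|^2+\alpha H_k(z_1,\dots,z_n),\qquad k\in\{1,\dots,n\},$$ with $z_k\in\mathbb{C}$, coupling parameter $\alpha\in\mathbb{R}$, non-zero constants $\beta_k,\gamma_k\in\mathbb{C}$ with $\gamma_k=\lambda+i\omega_k$ ($\lambda,\omega_k\in\mathbb{R}$), and smooth ($C^\infty$) interaction functions $H_k:\mathbb{C}^n\to\mathbb{C}$ satisfying $H_k(0)=0$ and $DH_k(0)=0$. Let $H^5_k$ denote the Taylor polynomial of $H_k$ at the origin up to order $5$ (a polynomial in $z_1,\dots,z_n,\bar z_1,\dots,\bar z_n$), and assume the non-resonance condition of the polynomial map $H^5=(H^5_1,\dots,H^5_n)$ holds. Then the ODE is locally (near $z=0$, for small $\alpha$) conjugate to a system of the form $$\dot u_k=\gamma_k u_k-\beta_k u_k|u_k|^2-\alpha^2 G_k(u)+\mathcal{O}\big(|\alpha||u|^6+|\alpha|^2|u|^5+|\alpha|^3|u|^4\big),\qquad k\in\{1,\dots,n\},$$ with $u_k\in\mathbb{C}$, for some complex polynomials $G_k$ (in $u$ and $\bar u$) having only terms of degree $3$ and higher.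
   Context: A polynomial here means a polynomial in $z_1,\dots,z_n$ and $\bar z_1,\dots,\bar z_n$ with complex coefficients. For a monomial $R(z)=c\,z_1^{s_1}\cdots z_n^{s_n}\bar z_1^{t_1}\cdots\bar z_n^{t_n}$ ($c\in\mathbb{C}$, $s_j,t_j$ non-negative integers), its $k$th non-resonance condition is $s_1\omega_1+\dots+s_n\omega_n-t_1\omega_1-\dots-t_n\omega_n-\omega_k\neq 0$. The $k$th non-resonance condition of a polynomial is the conjunction of the $k$th non-resonance conditions of all its monomial terms (with nonzero coefficient). The non-resonance condition of a polynomial map $H^5=(H^5_k)_{k}$ is the conjunction over all $k\in\{1,\dots,n\}$ of the $k$th non-resonance conditions of $H^5_k$. The $\mathcal{O}(\cdot)$ term denotes a remainder bounded in absolute value by a constant times the indicated expression for small $|\alpha|$ and $|u|$. *)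

theory Defs
  imports "HOL-Analysis.Analysis"
begin

definition dirderiv :: "('a::real_normed_vector \<Rightarrow> 'b::real_normed_vector) \<Rightarrow> 'a \<Rightarrow> 'a \<Rightarrow> 'b" where
  "dirderiv g v x = vector_derivative (\<lambda>t::real. g (x + t *\<^sub>R v)) (at 0)"

fun iter_dirderiv :: "('a::real_normed_vector \<Rightarrow> 'b::real_normed_vector) \<Rightarrow> 'a list \<Rightarrow> 'a \<Rightarrow> 'b" where
  "iter_dirderiv g [] = g"
| "iter_dirderiv g (v # vs) = dirderiv (iter_dirderiv g vs) v"

definition smooth_map :: "('a::euclidean_space \<Rightarrow> 'b::real_normed_vector) \<Rightarrow> bool" where
  "smooth_map g \<longleftrightarrow>
     (\<forall>vs. continuous_on UNIV (iter_dirderiv g vs)) \<and>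
     (\<forall>vs v x. (\<lambda>t::real. iter_dirderiv g vs (x + t *\<^sub>R v)) differentiable (at 0))"

definition taylor_poly :: "nat \<Rightarrow> ('a::real_normed_vector \<Rightarrow> 'b::real_normed_vector) \<Rightarrow> 'a \<Rightarrow> 'b" where
  "taylor_poly m g z = (\<Sum>j\<le>m. (1 / fact j) *\<^sub>R iter_dirderiv g (replicate j z) 0)"

text \<open>Polynomials in z_1..z_n, conj z_1 .. conj z_n given by a coefficient function on
  exponent pairs (s,t); the monomial (s,t) is prod_j z_j^(s j) * conj(z_j)^(t j).\<close>
definition zzbar_monomial :: "('n::finite \<Rightarrow> nat) \<Rightarrow> ('n \<Rightarrow> nat) \<Rightarrow> complex^'n \<Rightarrow> complex" where
  "zzbar_monomial s t z = (\<Prod>j\<in>UNIV. (z $ j) ^ s j * (cnj (z $ j)) ^ t j)"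

definition zzbar_poly :: "(('n::finite \<Rightarrow> nat) \<times> ('n \<Rightarrow> nat) \<Rightarrow> complex) \<Rightarrow> complex^'n \<Rightarrow> complex" where
  "zzbar_poly c z = (\<Sum>p\<in>{p. c p \<noteq> 0}. c p * zzbar_monomial (fst p) (snd p) z)"

definition is_zzbar_poly_repr :: "(('n::finite \<Rightarrow> nat) \<times> ('n \<Rightarrow> nat) \<Rightarrow> complex) \<Rightarrow> (complex^'n \<Rightarrow> complex) \<Rightarrow> bool" where
  "is_zzbar_poly_repr c f \<longleftrightarrow> finite {p. c p \<noteq> 0} \<and> (\<forall>z. f z = zzbar_poly c z)"

definition monomial_nonres :: "('n::finite \<Rightarrow> real) \<Rightarrow> 'n \<Rightarrow> ('n \<Rightarrow> nat) \<Rightarrow> ('n \<Rightarrow> nat) \<Rightarrow> bool" where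
  "monomial_nonres \<omega> k s t \<longleftrightarrow>
     (\<Sum>j\<in>UNIV. real (s j) * \<omega> j) - (\<Sum>j\<in>UNIV. real (t j) * \<omega> j) - \<omega> k \<noteq> 0"

definition poly_map_nonres :: "('n::finite \<Rightarrow> real) \<Rightarrow> (complex^'n \<Rightarrow> complex^'n) \<Rightarrow> bool" where
  "poly_map_nonres \<omega> P \<longleftrightarrow>
     (\<forall>k. \<exists>c. is_zzbar_poly_repr c (\<lambda>z. P z $ k) \<and>
          (\<forall>s t. c (s, t) \<noteq> 0 \<longrightarrow> monomial_nonres \<omega> k s t))"

definition monomial_degree :: "('n::finite \<Rightarrow> nat) \<Rightarrow> ('n \<Rightarrow> nat) \<Rightarrow> nat" where
  "monomial_degree s t = (\<Sum>j\<in>UNIV. s j + t j)"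

definition coupled_field ::
  "('n::finite \<Rightarrow> complex) \<Rightarrow> ('n \<Rightarrow> complex) \<Rightarrow> (complex^'n \<Rightarrow> complex^'n) \<Rightarrow> real \<Rightarrow> complex^'n \<Rightarrow> complex^'n" where
  "coupled_field \<gamma> \<beta> H \<alpha> z =
     (\<chi> k. \<gamma> k * z $ k - \<beta> k * z $ k * complex_of_real ((cmod (z $ k))\<^sup>2) + complex_of_real \<alpha> * H z $ k)"

end

theory Submission
  imports Defs
begin


lemma line_vd:
  assumes diff: "\<And>y. (\<lambda>t. g (y + t *\<^sub>R v)) differentiable (at 0)"
  shows "((\<lambda>t. g (x + t *\<^sub>R v)) has_vector_derivative dirderiv g v (x + s *\<^sub>R v)) (at s)"
proof -
  let ?y = "x + s *\<^sub>R v"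
  have h: "((\<lambda>t. g (?y + t *\<^sub>R v)) has_vector_derivative dirderiv g v ?y) (at 0)"
    using diff[of ?y] unfolding dirderiv_def by (simp add: vector_derivative_works)
  have l: "((\<lambda>t. t - s) has_vector_derivative 1) (at s)"
    by (auto intro!: derivative_eq_intros simp: has_vector_derivative_def)
  have "(((\<lambda>t. g (?y + t *\<^sub>R v)) \<circ> (\<lambda>t. t - s)) has_vector_derivative (1 *\<^sub>R dirderiv g v ?y)) (at s)"
    by (rule vector_diff_chain_at[OF l]) (simp add: h)
  moreover have "((\<lambda>t. g (?y + t *\<^sub>R v)) \<circ> (\<lambda>t. t - s)) = (\<lambda>t. g (x + t *\<^sub>R v))"
    by (auto simp: fun_eq_iff algebra_simps)
  ultimately show ?thesis by simp
qed

lemma bounded_linear_lincomb: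
  fixes c :: "'a::euclidean_space \<Rightarrow> 'b::real_normed_vector"
  shows "bounded_linear (\<lambda>h. \<Sum>b\<in>Basis. (h \<bullet> b) *\<^sub>R c b)"
proof -
  have "linear (\<lambda>h. \<Sum>b\<in>Basis. (h \<bullet> b) *\<^sub>R c b)"
    by (rule linearI) (simp_all add: inner_add_left scaleR_add_left sum.distrib scaleR_sum_right)
  then show ?thesis by (simp add: linear_conv_bounded_linear)
qed

lemma sum_nth_distinct: "distinct bs \<Longrightarrow> (\<Sum>j<length bs. f (bs ! j)) = (\<Sum>b\<in>set bs. f b)"
proof -
  assume "distinct bs"
  have "(\<Sum>j<length bs. f (bs ! j)) = sum_list (map f bs)"
    by (simp add: sum_list_sum_nth atLeast0LessThan)
  also have "\<dots> = (\<Sum>b\<in>set bs. f b)" using \<open>distinct bs\<close> by (simp add: sum_list_distinct_conv_sum_set)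
  finally show ?thesis .
qed

lemma frechet_from_dir:
  fixes g :: "'a::euclidean_space \<Rightarrow> 'b::real_normed_vector"
  assumes cont: "\<And>v. continuous_on UNIV (dirderiv g v)"
    and diff: "\<And>v y. (\<lambda>t. g (y + t *\<^sub>R v)) differentiable (at 0)"
  shows "(g has_derivative (\<lambda>h. \<Sum>b\<in>Basis. (h \<bullet> b) *\<^sub>R dirderiv g b x)) (at x)"
  unfolding has_derivative_at_alt
proof (intro conjI allI impI bounded_linear_lincomb)
  fix e :: real assume e: "e > 0"
  obtain bs where bs: "distinct bs" "set bs = (Basis :: 'a set)"
    using finite_distinct_list[OF finite_Basis] by blast
  define m where "m = length bs"
  have m0: "m > 0" using bs nonempty_Basis unfolding m_def by (metis length_greater_0_conv set_empty)
  define e' where "e' = e / (3 * real m)"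
  have e': "e' > 0" using e m0 by (simp add: e'_def)
  have "\<forall>\<^sub>F z in nhds x. \<forall>b\<in>Basis. dist (dirderiv g b z) (dirderiv g b x) < e'"
  proof (rule eventually_ball_finite[OF finite_Basis], intro ballI)
    fix b :: 'a
    have "isCont (dirderiv g b) x" using cont[of b] by (simp add: continuous_on_eq_continuous_at)
    then have "(dirderiv g b \<longlongrightarrow> dirderiv g b x) (nhds x)"
      by (simp add: isCont_def tendsto_at_iff_tendsto_nhds)
    then show "\<forall>\<^sub>F z in nhds x. dist (dirderiv g b z) (dirderiv g b x) < e'"
      using e' by (rule tendstoD)
  qed
  then obtain d0 where d0: "d0 > 0" "\<And>z b. dist z x < d0 \<Longrightarrow> b \<in> Basis \<Longrightarrow> dist (dirderiv g b z) (dirderiv g b x) < e'"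
    unfolding eventually_nhds_metric by blast
  define d where "d = d0 / real m"
  have d: "d > 0" using d0 m0 by (simp add: d_def)
  show "\<exists>d>0. \<forall>y. norm (y - x) < d \<longrightarrow>
     norm (g y - g x - (\<Sum>b\<in>Basis. ((y - x) \<bullet> b) *\<^sub>R dirderiv g b x)) \<le> e * norm (y - x)"
  proof (intro exI[of _ d] conjI allI impI d)
    fix y assume yx: "norm (y - x) < d"
    define h where "h = y - x"
    define t where "t i = h \<bullet> bs ! i" for i
    define p where "p i = x + (\<Sum>j<i. t j *\<^sub>R bs ! j)" for i
    have bsB: "bs ! i \<in> Basis" if "i < m" for i
      using bs(2) nth_mem[of i bs] that unfolding m_def by blast
    have tb: "\<bar>t i\<bar> \<le> norm h" if "i < m" for i
      unfolding t_def using Basis_le_norm[OF bsB[OF that], of h] .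
    have nb: "norm (bs ! i) = 1" if "i < m" for i
      using bsB[OF that] by simp
    have sumB: "(\<Sum>j<m. f (bs ! j)) = (\<Sum>b\<in>Basis. f b)" for f :: "'a \<Rightarrow> 'b"
      using sum_nth_distinct[OF bs(1), of f] bs(2) by (simp add: m_def)
    have sumB': "(\<Sum>j<m. t j *\<^sub>R bs ! j) = h"
      using sum_nth_distinct[OF bs(1), of "\<lambda>b. (h \<bullet> b) *\<^sub>R b"] bs(2) by (simp add: m_def t_def euclidean_representation)
    have pm: "p m = y" using sumB' by (simp add: p_def h_def)
    have p0: "p 0 = x" by (simp add: p_def)
    have pS: "p (Suc i) = p i + t i *\<^sub>R bs ! i" for i by (simp add: p_def)
    have pdist: "norm (p i + s *\<^sub>R bs ! i - x) < d0" if "i < m" "\<bar>s\<bar> \<le> \<bar>t i\<bar>" for i s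
    proof -
      have "norm (p i + s *\<^sub>R bs ! i - x) = norm ((\<Sum>j<i. t j *\<^sub>R bs ! j) + s *\<^sub>R bs ! i)"
        by (simp add: p_def)
      also have "\<dots> \<le> norm (\<Sum>j<i. t j *\<^sub>R bs ! j) + norm (s *\<^sub>R bs ! i)"
        by (rule norm_triangle_ineq)
      also have "\<dots> \<le> (\<Sum>j<i. norm (t j *\<^sub>R bs ! j)) + norm (s *\<^sub>R bs ! i)"
        by (intro add_mono norm_sum order_refl)
      finally have "norm (p i + s *\<^sub>R bs ! i - x) \<le> (\<Sum>j<i. norm (t j *\<^sub>R bs ! j)) + norm (s *\<^sub>R bs ! i)" .
      also have "\<dots> \<le> (\<Sum>j<i. norm h) + norm h"
      proof (intro add_mono sum_mono)
        fix j assume "j \<in> {..<i}"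
        then have "j < m" using that by auto
        then show "norm (t j *\<^sub>R bs ! j) \<le> norm h"
          using tb[of j] nb[of j] by simp
      next
        show "norm (s *\<^sub>R bs ! i) \<le> norm h"
          using tb[of i] nb[of i] that by simp
      qed
      also have "\<dots> = real (Suc i) * norm h" by (simp add: algebra_simps)
      also have "\<dots> \<le> real m * norm h" using that by (intro mult_right_mono) auto
      also have "\<dots> < real m * d" using yx m0 by (simp add: h_def)
      also have "\<dots> = d0" using m0 by (simp add: d_def)
      finally show ?thesis .
    qed
    have step: "norm (g (p (Suc i)) - g (p i) - t i *\<^sub>R dirderiv g (bs ! i) x) \<le> 3 * e' * norm h"
      if i: "i < m" for i
    proof -
      define b where "b = bs ! i"
      have bB: "b \<in> Basis" using bsB[OF i] by (simp add: b_def)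
      define f where "f s = g (p i + s *\<^sub>R b)" for s
      define f' where "f' s = dirderiv g b (p i + s *\<^sub>R b)" for s
      have fd: "(f has_vector_derivative f' s) (at s within closed_segment 0 (t i))" for s
        unfolding f_def f'_def by (rule has_vector_derivative_at_within[OF line_vd[OF diff]])
      have cl: "\<bar>s\<bar> \<le> \<bar>t i\<bar>" if "s \<in> closed_segment 0 (t i)" for s
        using that by (auto simp: closed_segment_eq_real_ivl split: if_splits)
      have near: "dist (f' s) (dirderiv g b x) < e'" if "s \<in> closed_segment 0 (t i)" for s
        unfolding f'_def using d0(2)[OF _ bB] pdist[OF i cl[OF that]] by (simp add: dist_norm b_def)
      have B: "norm (f' s - f' 0) \<le> 2 * e'" if "s \<in> closed_segment 0 (t i)" for s
      proof -
        have "norm (f' s - f' 0) \<le> dist (f' s) (dirderiv g b x) + dist (f' 0) (dirderiv g b x)"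
          using dist_triangle2[of "f' s" "f' 0" "dirderiv g b x"] by (simp add: dist_norm)
        then show ?thesis using near[OF that] near[of 0] by simp
      qed
      have lin: "norm (f (t i) - f 0 - (t i - 0) *\<^sub>R f' 0) \<le> norm (t i - 0) * (2 * e')"
        by (rule vector_differentiable_bound_linearization[OF fd _ B]) auto
      have n0: "norm (f' 0 - dirderiv g b x) \<le> e'" using near[of 0] by (simp add: dist_norm)
      have "g (p (Suc i)) - g (p i) - t i *\<^sub>R dirderiv g b x
          = (f (t i) - f 0 - t i *\<^sub>R f' 0) + t i *\<^sub>R (f' 0 - dirderiv g b x)"
        by (simp add: f_def pS b_def algebra_simps)
      then have "norm (g (p (Suc i)) - g (p i) - t i *\<^sub>R dirderiv g b x)
          \<le> \<bar>t i\<bar> * (2 * e') + \<bar>t i\<bar> * e'"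
      proof -
        have "norm (t i *\<^sub>R (f' 0 - dirderiv g b x)) \<le> \<bar>t i\<bar> * e'"
          using n0 by (simp add: mult_left_mono)
        moreover have "norm (f (t i) - f 0 - t i *\<^sub>R f' 0) \<le> \<bar>t i\<bar> * (2 * e')"
          using lin by simp
        ultimately show ?thesis using \<open>g (p (Suc i)) - g (p i) - t i *\<^sub>R dirderiv g b x
          = (f (t i) - f 0 - t i *\<^sub>R f' 0) + t i *\<^sub>R (f' 0 - dirderiv g b x)\<close>
          by (metis (no_types, lifting) add_mono norm_triangle_le)
      qed
      also have "\<dots> = 3 * e' * \<bar>t i\<bar>" by simp
      also have "\<dots> \<le> 3 * e' * norm h" using tb[OF i] e' by (intro mult_left_mono) auto
      finally show ?thesis by (simp add: b_def)
    qed
    have "g y - g x - (\<Sum>b\<in>Basis. (h \<bullet> b) *\<^sub>R dirderiv g b x)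
        = (\<Sum>i<m. g (p (Suc i)) - g (p i) - t i *\<^sub>R dirderiv g (bs ! i) x)"
    proof -
      have tel: "(\<Sum>i<m. g (p (Suc i)) - g (p i)) = g y - g x"
        using sum_lessThan_telescope[of "\<lambda>i. g (p i)" m] pm p0 by simp
      have lsum: "(\<Sum>b\<in>Basis. (h \<bullet> b) *\<^sub>R dirderiv g b x) = (\<Sum>i<m. t i *\<^sub>R dirderiv g (bs ! i) x)"
        using sumB[of "\<lambda>b. (h \<bullet> b) *\<^sub>R dirderiv g b x"] by (simp add: t_def)
      have "(\<Sum>i<m. g (p (Suc i)) - g (p i) - t i *\<^sub>R dirderiv g (bs ! i) x)
          = (\<Sum>i<m. g (p (Suc i)) - g (p i)) - (\<Sum>i<m. t i *\<^sub>R dirderiv g (bs ! i) x)"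
        by (simp only: sum_subtractf)
      then show ?thesis using tel lsum by simp
    qed
    then have "norm (g y - g x - (\<Sum>b\<in>Basis. (h \<bullet> b) *\<^sub>R dirderiv g b x))
        \<le> (\<Sum>i<m. norm (g (p (Suc i)) - g (p i) - t i *\<^sub>R dirderiv g (bs ! i) x))"
      by (simp add: norm_sum)
    also have "\<dots> \<le> (\<Sum>i<m. 3 * e' * norm h)" by (intro sum_mono step) auto
    also have "\<dots> = e * norm h" using m0 by (simp add: e'_def)
    finally show "norm (g y - g x - (\<Sum>b\<in>Basis. ((y - x) \<bullet> b) *\<^sub>R dirderiv g b x)) \<le> e * norm (y - x)"
      by (simp add: h_def)
  qed
qed


lemma iter_append: "iter_dirderiv g (vs @ ws) = iter_dirderiv (iter_dirderiv g ws) vs"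
  by (induction vs) auto

lemma smooth_dir: "smooth_map g \<Longrightarrow> smooth_map (dirderiv g b)"
proof -
  assume s: "smooth_map g"
  have e: "iter_dirderiv (dirderiv g b) vs = iter_dirderiv g (vs @ [b])" for vs
    by (simp add: iter_append)
  show ?thesis using s unfolding smooth_map_def e by blast
qed

lemma smooth_frechet:
  fixes g :: "'a::euclidean_space \<Rightarrow> 'b::real_normed_vector"
  assumes "smooth_map g"
  shows "(g has_derivative (\<lambda>h. \<Sum>b\<in>Basis. (h \<bullet> b) *\<^sub>R dirderiv g b x)) (at x)"
proof (rule frechet_from_dir)
  fix v
  show "continuous_on UNIV (dirderiv g v)"
    using assms unfolding smooth_map_def by (metis iter_dirderiv.simps)
next
  fix v y
  show "(\<lambda>t. g (y + t *\<^sub>R v)) differentiable at 0"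
    using assms unfolding smooth_map_def by (metis iter_dirderiv.simps(1))
qed

lemma dir_lin:
  fixes g :: "'a::euclidean_space \<Rightarrow> 'b::real_normed_vector"
  assumes "smooth_map g"
  shows "dirderiv g v x = (\<Sum>b\<in>Basis. (v \<bullet> b) *\<^sub>R dirderiv g b x)"
proof -
  let ?L = "\<lambda>h. \<Sum>b\<in>Basis. (h \<bullet> b) *\<^sub>R dirderiv g b x"
  have l: "((\<lambda>t. x + t *\<^sub>R v) has_derivative (\<lambda>t. t *\<^sub>R v)) (at 0)"
    by (intro derivative_eq_intros) auto
  have "((\<lambda>t. g (x + t *\<^sub>R v)) has_derivative (\<lambda>t. ?L (t *\<^sub>R v))) (at 0)"
    using diff_chain_at[OF l, of g ?L] smooth_frechet[OF assms, of x] by (simp add: o_def)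
  moreover have "?L (t *\<^sub>R v) = t *\<^sub>R ?L v" for t
    by (simp add: scaleR_sum_right)
  ultimately have "((\<lambda>t. g (x + t *\<^sub>R v)) has_vector_derivative ?L v) (at 0)"
    by (simp add: has_vector_derivative_def)
  then show ?thesis unfolding dirderiv_def by (rule vector_derivative_at)
qed

lemma dirderiv_lincomb:
  fixes F :: "'i \<Rightarrow> 'a::real_normed_vector \<Rightarrow> 'b::real_normed_vector"
  assumes "finite I" and d: "\<And>i. i \<in> I \<Longrightarrow> (\<lambda>t. F i (x + t *\<^sub>R v)) differentiable (at 0)"
  shows "dirderiv (\<lambda>y. \<Sum>i\<in>I. c i *\<^sub>R F i y) v x = (\<Sum>i\<in>I. c i *\<^sub>R dirderiv (F i) v x)"
proof -
  have "((\<lambda>t. F i (x + t *\<^sub>R v)) has_vector_derivative dirderiv (F i) v x) (at 0)" if "i \<in> I" for i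
    using d[OF that] unfolding dirderiv_def by (simp add: vector_derivative_works)
  then have "((\<lambda>t. c i *\<^sub>R F i (x + t *\<^sub>R v)) has_vector_derivative c i *\<^sub>R dirderiv (F i) v x) (at 0)" if "i \<in> I" for i
    using that by (intro bounded_linear.has_vector_derivative[OF bounded_linear_scaleR_right])
  then have "((\<lambda>t. \<Sum>i\<in>I. c i *\<^sub>R F i (x + t *\<^sub>R v)) has_vector_derivative (\<Sum>i\<in>I. c i *\<^sub>R dirderiv (F i) v x)) (at 0)"
    by (rule has_vector_derivative_sum)
  then show ?thesis unfolding dirderiv_def by (rule vector_derivative_at)
qed

lemma iter_lincomb:
  fixes F :: "'i \<Rightarrow> 'a::euclidean_space \<Rightarrow> 'b::real_normed_vector"
  assumes "finite I" and s: "\<And>i. i \<in> I \<Longrightarrow> smooth_map (F i)"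
  shows "iter_dirderiv (\<lambda>y. \<Sum>i\<in>I. c i *\<^sub>R F i y) vs = (\<lambda>y. \<Sum>i\<in>I. c i *\<^sub>R iter_dirderiv (F i) vs y)"
proof (induction vs)
  case Nil then show ?case by simp
next
  case (Cons v vs)
  have "iter_dirderiv (\<lambda>y. \<Sum>i\<in>I. c i *\<^sub>R F i y) (v#vs) = dirderiv (\<lambda>y. \<Sum>i\<in>I. c i *\<^sub>R iter_dirderiv (F i) vs y) v"
    using Cons by simp
  also have "\<dots> = (\<lambda>y. \<Sum>i\<in>I. c i *\<^sub>R iter_dirderiv (F i) (v#vs) y)"
  proof
    fix y
    show "dirderiv (\<lambda>y. \<Sum>i\<in>I. c i *\<^sub>R iter_dirderiv (F i) vs y) v y = (\<Sum>i\<in>I. c i *\<^sub>R iter_dirderiv (F i) (v#vs) y)"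
      using s assms(1) unfolding smooth_map_def by (subst dirderiv_lincomb) auto
  qed
  finally show ?case .
qed

lemma cont_bound_cball:
  fixes f :: "'a::euclidean_space \<Rightarrow> 'b::real_normed_vector"
  assumes "continuous_on UNIV f"
  shows "\<exists>M\<ge>0. \<forall>x. norm x \<le> 1 \<longrightarrow> norm (f x) \<le> M"
proof -
  have "compact (f ` cball 0 1)"
    by (rule compact_continuous_image[OF continuous_on_subset[OF assms]]) auto
  then obtain M where "\<forall>y\<in>f ` cball 0 1. norm y \<le> M"
    using compact_imp_bounded bounded_iff by metis
  show ?thesis
  proof (intro exI[of _ "max M 0"] conjI allI impI)
    fix x :: 'a assume "norm x \<le> 1"
    then have "x \<in> cball 0 1" by simp
    then have "f x \<in> f ` cball 0 1" by blast
    then have "norm (f x) \<le> M" using \<open>\<forall>y\<in>f ` cball 0 1. norm y \<le> M\<close> by blast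
    then show "norm (f x) \<le> max M 0" by simp
  qed simp
qed

lemma smooth_bound:
  fixes g :: "'a::euclidean_space \<Rightarrow> 'b::real_normed_vector"
  assumes "smooth_map g"
  shows "\<exists>M\<ge>0. \<forall>vs x. length vs = m \<longrightarrow> norm x \<le> 1 \<longrightarrow> norm (iter_dirderiv g vs x) \<le> M * prod_list (map norm vs)"
  using assms
proof (induction m arbitrary: g)
  case 0
  then have "continuous_on UNIV g" unfolding smooth_map_def by (metis iter_dirderiv.simps(1))
  then show ?case using cont_bound_cball by fastforce
next
  case (Suc m)
  have "\<forall>b\<in>(Basis::'a set). \<exists>M\<ge>0. \<forall>vs x. length vs = m \<longrightarrow> norm x \<le> 1 \<longrightarrow> norm (iter_dirderiv (dirderiv g b) vs x) \<le> M * prod_list (map norm vs)"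
    using Suc.IH smooth_dir[OF Suc.prems] by blast
  then obtain Mf where Mf: "\<And>b. b \<in> Basis \<Longrightarrow> Mf b \<ge> 0"
    "\<And>b vs x. b \<in> Basis \<Longrightarrow> length vs = m \<Longrightarrow> norm x \<le> 1 \<Longrightarrow> norm (iter_dirderiv (dirderiv g b) vs x) \<le> Mf b * prod_list (map norm vs)"
    by metis
  show ?case
  proof (intro exI[of _ "\<Sum>b\<in>Basis. Mf b"] conjI allI impI)
    show "0 \<le> (\<Sum>b\<in>Basis. Mf b)" using Mf(1) by (simp add: sum_nonneg)
  next
    fix vs :: "'a list" and x :: 'a
    assume len: "length vs = Suc m" and x: "norm x \<le> 1"
    obtain ws v where vs: "vs = ws @ [v]" using len by (metis length_Suc_conv_rev)
    have lw: "length ws = m" using len vs by simp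
    have "iter_dirderiv g vs = iter_dirderiv (dirderiv g v) ws"
      by (simp add: vs iter_append)
    also have "dirderiv g v = (\<lambda>y. \<Sum>b\<in>Basis. (v \<bullet> b) *\<^sub>R dirderiv g b y)"
      using dir_lin[OF Suc.prems] by blast
    also have "iter_dirderiv (\<lambda>y. \<Sum>b\<in>Basis. (v \<bullet> b) *\<^sub>R dirderiv g b y) ws
        = (\<lambda>y. \<Sum>b\<in>Basis. (v \<bullet> b) *\<^sub>R iter_dirderiv (dirderiv g b) ws y)"
      by (rule iter_lincomb) (auto intro: smooth_dir[OF Suc.prems])
    finally have eq: "iter_dirderiv g vs = (\<lambda>y. \<Sum>b\<in>Basis. (v \<bullet> b) *\<^sub>R iter_dirderiv (dirderiv g b) ws y)" .
    have "norm (iter_dirderiv g vs x) = norm (\<Sum>b\<in>Basis. (v \<bullet> b) *\<^sub>R iter_dirderiv (dirderiv g b) ws x)"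
      by (simp add: eq)
    also have "\<dots> \<le> (\<Sum>b\<in>Basis. norm ((v \<bullet> b) *\<^sub>R iter_dirderiv (dirderiv g b) ws x))"
      by (rule norm_sum)
    also have "\<dots> \<le> (\<Sum>b\<in>Basis. norm v * (Mf b * prod_list (map norm ws)))"
    proof (intro sum_mono)
      fix b :: 'a assume b: "b \<in> Basis"
      show "norm ((v \<bullet> b) *\<^sub>R iter_dirderiv (dirderiv g b) ws x) \<le> norm v * (Mf b * prod_list (map norm ws))"
        unfolding norm_scaleR
        by (intro mult_mono Basis_le_norm b Mf(2) lw x) auto
    qed
    also have "\<dots> = (\<Sum>b\<in>Basis. Mf b) * prod_list (map norm vs)"
      by (simp add: vs sum_distrib_left sum_distrib_right algebra_simps)
    finally show "norm (iter_dirderiv g vs x) \<le> (\<Sum>b\<in>Basis. Mf b) * prod_list (map norm vs)" .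
  qed
qed

lemma taylor_bound:
  fixes H :: "'a::euclidean_space \<Rightarrow> 'b::banach"
  assumes "smooth_map H"
  shows "\<exists>M\<ge>0. \<forall>x. norm x \<le> 1 \<longrightarrow> norm (H x - taylor_poly 5 H x) \<le> M * norm x ^ 6"
proof -
  obtain M where M: "M \<ge> 0" "\<And>vs x. length vs = 6 \<Longrightarrow> norm x \<le> 1 \<Longrightarrow> norm (iter_dirderiv H vs x) \<le> M * prod_list (map norm vs)"
    using smooth_bound[OF assms, of 6] by blast
  have diffs: "\<And>vs v y. (\<lambda>t. iter_dirderiv H vs (y + t *\<^sub>R v)) differentiable (at 0)"
    using assms unfolding smooth_map_def by blast
  show ?thesis
  proof (intro exI[of _ M] conjI allI impI M(1))
    fix x :: 'a assume x: "norm x \<le> 1"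
    define Df where "Df m t = iter_dirderiv H (replicate m x) (t *\<^sub>R x)" for m t
    have Df: "(Df m has_vector_derivative Df (Suc m) t) (at t within {0..1})" for m t
    proof -
      have "((\<lambda>t. iter_dirderiv H (replicate m x) (0 + t *\<^sub>R x)) has_vector_derivative
          dirderiv (iter_dirderiv H (replicate m x)) x (0 + t *\<^sub>R x)) (at t)"
        by (rule line_vd[OF diffs])
      then show ?thesis unfolding Df_def by (simp add: has_vector_derivative_at_within)
    qed
    have T: "((\<lambda>t. ((1 - t) ^ (6 - 1) / fact (6 - 1)) *\<^sub>R Df 6 t) has_integral
        (\<lambda>t. H (t *\<^sub>R x)) 1 - (\<Sum>i<6. ((1 - 0) ^ i / fact i) *\<^sub>R Df i 0)) {0..1}"
      apply (rule Taylor_has_integral[of 6 Df "\<lambda>t. H (t *\<^sub>R x)"])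
         apply simp
        apply (simp add: Df_def fun_eq_iff)
       apply (rule Df)
      apply simp
      done
    have e: "(\<lambda>t. H (t *\<^sub>R x)) 1 - (\<Sum>i<6. ((1 - 0) ^ i / fact i) *\<^sub>R Df i 0) = H x - taylor_poly 5 H x"
      by (simp add: taylor_poly_def Df_def lessThan_Suc_atMost[symmetric])
    have bnd: "norm (((1 - t) ^ (6 - 1) / fact (6 - 1)) *\<^sub>R Df 6 t) \<le> M * norm x ^ 6" if t: "t \<in> cbox 0 1" for t
    proof -
      have t01: "0 \<le> t" "t \<le> 1" using t by auto
      have p1: "(1 - t) ^ 5 \<le> (1::real)" "0 \<le> (1 - t) ^ 5" using t01 by (auto intro: power_le_one)
      have f5: "(1 - t) ^ 5 \<le> (fact 5 :: real)" using p1 fact_ge_1[of 5, where 'a=real] by linarith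
      have c: "\<bar>(1 - t) ^ 5 / fact 5\<bar> \<le> (1::real)"
      proof -
        have "\<bar>(1 - t) ^ 5 / fact 5\<bar> = (1 - t) ^ 5 / (fact 5 :: real)"
          using p1 by (intro abs_of_nonneg divide_nonneg_pos) auto
        also have "\<dots> \<le> 1" using f5 fact_gt_zero by (metis divide_le_eq_1_pos)
        finally show ?thesis .
      qed
      have "norm (t *\<^sub>R x) \<le> 1" using t01 x by (simp add: mult_le_one)
      then have d: "norm (Df 6 t) \<le> M * norm x ^ 6"
        unfolding Df_def using M(2)[of "replicate 6 x" "t *\<^sub>R x"] by (simp add: prod_list_replicate)
      have "norm (((1 - t) ^ 5 / fact 5) *\<^sub>R Df 6 t) \<le> 1 * (M * norm x ^ 6)"
        unfolding norm_scaleR by (rule mult_mono[OF c d]) (auto simp: M(1))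
      then show ?thesis by simp
    qed
    have T': "((\<lambda>t. ((1 - t) ^ (6 - 1) / fact (6 - 1)) *\<^sub>R Df 6 t) has_integral (H x - taylor_poly 5 H x)) (cbox 0 1)"
      using T e by (simp add: cbox_interval)
    show "norm (H x - taylor_poly 5 H x) \<le> M * norm x ^ 6"
      using has_integral_bound[OF _ T' bnd] M(1) by simp
  qed
qed




lemma has_derivative_vecI:
  fixes f :: "'a::real_normed_vector \<Rightarrow> complex^'n"
  assumes "\<And>k. ((\<lambda>u. f u $ k) has_derivative (\<lambda>w. f' w $ k)) (at x within S)"
  shows "(f has_derivative f') (at x within S)"
proof -
  have "\<forall>i\<in>Basis. ((\<lambda>x. f x \<bullet> i) has_derivative (\<lambda>x. f' x \<bullet> i)) (at x within S)"
  proof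
    fix i :: "complex^'n" assume "i \<in> Basis"
    then obtain k b where i: "i = axis k b" and b: "b \<in> Basis" by (auto simp: Basis_vec_def)
    have "((\<lambda>x. f x $ k \<bullet> b) has_derivative (\<lambda>x. f' x $ k \<bullet> b)) (at x within S)"
      using assms[of k] by (intro derivative_intros) auto
    then show "((\<lambda>x. f x \<bullet> i) has_derivative (\<lambda>x. f' x \<bullet> i)) (at x within S)"
      using inner_axis[of _ k b] inner_commute[of b] by (simp add: i)
  qed
  then show ?thesis using has_derivative_componentwise_within by blast
qed

type_synonym 'n fac = "'n \<times> bool"

definition lin :: "'n fac \<Rightarrow> complex^'n \<Rightarrow> complex" where
  "lin f u = (if snd f then cnj (u $ fst f) else u $ fst f)"

definition mono :: "'n fac list \<Rightarrow> complex^'n \<Rightarrow> complex" where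
  "mono fs u = prod_list (map (\<lambda>f. lin f u) fs)"

fun Dmono :: "'n fac list \<Rightarrow> complex^'n \<Rightarrow> complex^'n \<Rightarrow> complex" where
  "Dmono [] u w = 0"
| "Dmono (f#fs) u w = lin f w * mono fs u + lin f u * Dmono fs u w"

definition sev :: "(complex \<times> 'n fac list) list \<Rightarrow> complex^'n \<Rightarrow> complex" where
  "sev L u = sum_list (map (\<lambda>(c,fs). c * mono fs u) L)"

definition sDev :: "(complex \<times> 'n fac list) list \<Rightarrow> complex^'n \<Rightarrow> complex^'n \<Rightarrow> complex" where
  "sDev L u w = sum_list (map (\<lambda>(c,fs). c * Dmono fs u w) L)"

definition ev :: "('n \<Rightarrow> (complex \<times> 'n fac list) list) \<Rightarrow> complex^'n \<Rightarrow> complex^'n" where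
  "ev ts u = (\<chi> k. sev (ts k) u)"

definition Dev :: "('n \<Rightarrow> (complex \<times> 'n fac list) list) \<Rightarrow> complex^'n \<Rightarrow> complex^'n \<Rightarrow> complex^'n" where
  "Dev ts u w = (\<chi> k. sDev (ts k) u w)"

lemma mono_Nil[simp]: "mono [] u = 1" and mono_Cons[simp]: "mono (f#fs) u = lin f u * mono fs u"
  by (simp_all add: mono_def)

lemma mono_append[simp]: "mono (fs @ gs) u = mono fs u * mono gs u"
  by (simp add: mono_def)

lemma sev_Nil[simp]: "sev [] u = 0" and sev_Cons[simp]: "sev ((c,fs)#L) u = c * mono fs u + sev L u"
  by (simp_all add: sev_def)
lemma sev_append[simp]: "sev (L @ M) u = sev L u + sev M u"
  by (simp add: sev_def)
lemma sDev_Nil[simp]: "sDev [] u w = 0" and sDev_Cons[simp]: "sDev ((c,fs)#L) u w = c * Dmono fs u w + sDev L u w"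
  by (simp_all add: sDev_def)
lemma sDev_append[simp]: "sDev (L @ M) u w = sDev L u w + sDev M u w"
  by (simp add: sDev_def)

lemma ev_nth[simp]: "ev ts u $ k = sev (ts k) u" by (simp add: ev_def)
lemma Dev_nth[simp]: "Dev ts u w $ k = sDev (ts k) u w" by (simp add: Dev_def)

lemma bounded_linear_lin: "bounded_linear (lin f)"
proof (cases "snd f")
  case True
  then have "lin f = (\<lambda>u. cnj (u $ fst f))" by (auto simp: lin_def fun_eq_iff)
  then show ?thesis using bounded_linear_compose[OF bounded_linear_cnj bounded_linear_vec_nth] by simp
next
  case False
  then have "lin f = (\<lambda>u. u $ fst f)" by (auto simp: lin_def fun_eq_iff)
  then show ?thesis by (simp add: bounded_linear_vec_nth)
qed

lemma lin_norm: "cmod (lin f u) \<le> norm u"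
    using Finite_Cartesian_Product.norm_nth_le[of u "fst f"] by (simp add: lin_def)

lemma lin_add: "lin f (u + v) = lin f u + lin f v"
  by (simp add: lin_def)

lemma lin_scaleR: "lin f (r *\<^sub>R u) = of_real r * lin f u"
  apply (simp only: lin_def vector_scaleR_component)
  apply (simp add: scaleR_conv_of_real)
  done

lemma mono_has_derivative: "(mono fs has_derivative Dmono fs u) (at u within S)"
proof (induction fs)
  case Nil
  then show ?case by (simp add: mono_def)
next
  case (Cons f fs)
  have l: "(lin f has_derivative lin f) (at u within S)"
    by (rule bounded_linear.has_derivative[OF bounded_linear_lin has_derivative_ident])
  have "((\<lambda>u. lin f u * mono fs u) has_derivative (\<lambda>w. lin f u * Dmono fs u w + lin f w * mono fs u)) (at u within S)"
    by (rule has_derivative_mult[OF l Cons.IH])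
  then show ?case by (simp add: algebra_simps)
qed

lemma mono_norm: "cmod (mono fs u) \<le> norm u ^ length fs"
proof (induction fs)
  case Nil then show ?case by simp
next
  case (Cons f fs)
  have "cmod (mono (f#fs) u) = cmod (lin f u) * cmod (mono fs u)" by (simp add: norm_mult)
  also have "\<dots> \<le> norm u * norm u ^ length fs"
    by (rule mult_mono[OF lin_norm Cons.IH]) auto
  finally show ?case by simp
qed

lemma Dmono_norm: "cmod (Dmono fs u w) \<le> real (length fs) * norm u ^ (length fs - 1) * norm w"
proof (induction fs)
  case Nil then show ?case by simp
next
  case (Cons f fs)
  have a: "cmod (lin f w * mono fs u) \<le> norm w * norm u ^ length fs"
    unfolding norm_mult by (rule mult_mono[OF lin_norm mono_norm]) auto
  have b: "cmod (lin f u * Dmono fs u w) \<le> norm u * (real (length fs) * norm u ^ (length fs - 1) * norm w)"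
    unfolding norm_mult by (rule mult_mono[OF lin_norm Cons.IH]) auto
  have c: "norm u * (real (length fs) * norm u ^ (length fs - 1) * norm w) = real (length fs) * norm u ^ length fs * norm w"
    by (cases "length fs") auto
  have "cmod (Dmono (f#fs) u w) \<le> cmod (lin f w * mono fs u) + cmod (lin f u * Dmono fs u w)"
    by (simp add: norm_triangle_ineq)
  also have "\<dots> \<le> norm w * norm u ^ length fs + norm u * (real (length fs) * norm u ^ (length fs - 1) * norm w)"
    using a b by linarith
  also have "\<dots> = norm w * norm u ^ length fs + real (length fs) * norm u ^ length fs * norm w"
    using c by simp
  finally have "cmod (Dmono (f#fs) u w) \<le> norm w * norm u ^ length fs + real (length fs) * norm u ^ length fs * norm w" .
  then show ?case by (simp add: algebra_simps)
qed

lemma sev_has_derivative: "(sev L has_derivative sDev L u) (at u within S)"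
proof (induction L)
  case Nil then show ?case by (simp add: sev_def sDev_def)
next
  case (Cons p L)
  obtain c fs where p: "p = (c,fs)" by (cases p)
  have "((\<lambda>u. c * mono fs u + sev L u) has_derivative (\<lambda>w. c * Dmono fs u w + sDev L u w)) (at u within S)"
    by (intro has_derivative_add has_derivative_mult_right mono_has_derivative Cons.IH)
  then show ?case by (simp add: p)
qed

lemma ev_has_derivative: "(ev ts has_derivative Dev ts u) (at u within S)"
  by (rule has_derivative_vecI) (simp add: sev_has_derivative)

lemma linear_Dev: "linear (Dev ts u)"
  using has_derivative_linear[OF ev_has_derivative] .

definition cw :: "(complex \<times> 'n fac list) list \<Rightarrow> real" where
  "cw L = sum_list (map (\<lambda>(c,fs). cmod c) L)"
definition cwl :: "(complex \<times> 'n fac list) list \<Rightarrow> real" where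
  "cwl L = sum_list (map (\<lambda>(c,fs). cmod c * real (length fs)) L)"

lemma cw_Cons[simp]: "cw ((c,fs)#L) = cmod c + cw L" by (simp add: cw_def)
lemma cwl_Cons[simp]: "cwl ((c,fs)#L) = cmod c * real (length fs) + cwl L" by (simp add: cwl_def)
lemma cw_Nil[simp]: "cw [] = 0" by (simp add: cw_def)
lemma cwl_Nil[simp]: "cwl [] = 0" by (simp add: cwl_def)
lemma cw_nonneg: "cw L \<ge> 0"
  by (induction L) (auto simp: cw_def)
lemma cwl_nonneg: "cwl L \<ge> 0"
  by (induction L) (auto simp: cwl_def)

lemma sev_bound:
  assumes "\<forall>(c,fs)\<in>set L. length fs \<ge> d" and "norm u \<le> 1"
  shows "cmod (sev L u) \<le> cw L * norm u ^ d"
  using assms(1)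
proof (induction L)
  case Nil then show ?case by simp
next
  case (Cons p L)
  obtain c fs where p: "p = (c,fs)" by (cases p)
  have "norm u ^ length fs \<le> norm u ^ d"
    using Cons.prems p assms(2) by (intro power_decreasing) auto
  then have "cmod (c * mono fs u) \<le> cmod c * norm u ^ d"
    unfolding norm_mult by (intro mult_left_mono order_trans[OF mono_norm]) auto
  moreover have "cmod (sev L u) \<le> cw L * norm u ^ d" using Cons by auto
  moreover have "cmod (sev (p#L) u) \<le> cmod (c * mono fs u) + cmod (sev L u)"
    by (simp add: p norm_triangle_ineq)
  ultimately show ?case
    by (simp add: p distrib_right)
qed

lemma sDev_bound:
  assumes "\<forall>(c,fs)\<in>set L. length fs \<ge> 2" and "norm u \<le> 1"
  shows "cmod (sDev L u w) \<le> cwl L * norm u * norm w"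
  using assms(1)
proof (induction L)
  case Nil then show ?case by simp
next
  case (Cons p L)
  obtain c fs where p: "p = (c,fs)" by (cases p)
  have "norm u ^ (length fs - 1) \<le> norm u ^ 1"
    using Cons.prems p assms(2) by (intro power_decreasing) auto
  then have "cmod (Dmono fs u w) \<le> real (length fs) * norm u * norm w"
    using Dmono_norm[of fs u w] 
    by (smt (verit, best) mult_left_mono mult_right_mono norm_ge_zero of_nat_0_le_iff power_one_right)
  then have "cmod (c * Dmono fs u w) \<le> cmod c * (real (length fs) * norm u * norm w)"
    unfolding norm_mult by (intro mult_left_mono) auto
  moreover have "cmod (sDev L u w) \<le> cwl L * norm u * norm w" using Cons by auto
  moreover have "cmod (sDev (p#L) u w) \<le> cmod (c * Dmono fs u w) + cmod (sDev L u w)"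
    by (simp add: p norm_triangle_ineq)
  ultimately show ?case
    by (simp add: p distrib_right)
qed

lemma norm_vec_le_sum: "norm (x::complex^'n) \<le> (\<Sum>k\<in>UNIV. cmod (x $ k))"
  unfolding norm_vec_def by (rule L2_set_le_sum) simp

lemma ev_bound:
  assumes "\<forall>k. \<forall>(c,fs)\<in>set (ts k). length fs \<ge> d" and "norm u \<le> 1"
  shows "norm (ev ts u) \<le> (\<Sum>k\<in>UNIV. cw (ts k)) * norm u ^ d"
proof -
  have "norm (ev ts u) \<le> (\<Sum>k\<in>UNIV. cmod (sev (ts k) u))"
    using norm_vec_le_sum[of "ev ts u"] by simp
  also have "\<dots> \<le> (\<Sum>k\<in>UNIV. cw (ts k) * norm u ^ d)"
    using assms by (intro sum_mono sev_bound) auto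
  finally show ?thesis by (simp add: sum_distrib_right)
qed

lemma Dev_bound:
  assumes "\<forall>k. \<forall>(c,fs)\<in>set (ts k). length fs \<ge> 2" and "norm u \<le> 1"
  shows "norm (Dev ts u w) \<le> (\<Sum>k\<in>UNIV. cwl (ts k)) * norm u * norm w"
proof -
  have "norm (Dev ts u w) \<le> (\<Sum>k\<in>UNIV. cmod (sDev (ts k) u w))"
    using norm_vec_le_sum[of "Dev ts u w"] by simp
  also have "\<dots> \<le> (\<Sum>k\<in>UNIV. cwl (ts k) * norm u * norm w)"
    using assms by (intro sum_mono sDev_bound) auto
  finally show ?thesis by (simp add: sum_distrib_right)
qed

lemma sev_map_cons: "sev (map (\<lambda>(c,gs). (c, f#gs)) L) u = lin f u * sev L u"
  by (induction L) (auto simp: algebra_simps)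

lemma sev_map_app: "sev (map (\<lambda>(c,gs). (c, gs @ fs)) L) u = sev L u * mono fs u"
  by (induction L) (auto simp: algebra_simps)

lemma sev_map_scale: "sev (map (\<lambda>(c',gs). (c * c', gs)) L) u = c * sev L u"
  by (induction L) (auto simp: algebra_simps)

lemma sev_concat: "sev (concat Ls) u = sum_list (map (\<lambda>L. sev L u) Ls)"
  by (induction Ls) auto

lemma sev_filter: "sev L u = sev (filter P L) u + sev (filter (\<lambda>x. \<not> P x) L) u"
  by (induction L) auto

lemma sDev_eq_sev_gen:
  assumes "\<And>fs. Dmono fs u w = sev (g fs) u"
  shows "sDev L u w = sev (concat (map (\<lambda>(c,fs). map (\<lambda>(c',gs). (c * c', gs)) (g fs)) L)) u"
  by (induction L) (auto simp: assms sev_map_scale)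

definition flipf :: "'n fac \<Rightarrow> 'n fac" where "flipf f = (fst f, \<not> snd f)"

lemma lin_flip: "lin (flipf f) u = cnj (lin f u)"
  by (simp add: lin_def flipf_def)

lemma mono_flip: "mono (map flipf fs) u = cnj (mono fs u)"
  by (induction fs) (auto simp: lin_flip)

definition cnjL :: "(complex \<times> 'n fac list) list \<Rightarrow> (complex \<times> 'n fac list) list" where
  "cnjL L = map (\<lambda>(c,gs). (cnj c, map flipf gs)) L"

lemma sev_cnjL: "sev (cnjL L) u = cnj (sev L u)"
  by (induction L) (auto simp: cnjL_def mono_flip)

definition sfreq :: "('n \<Rightarrow> real) \<Rightarrow> 'n fac list \<Rightarrow> real" where
  "sfreq \<omega> fs = sum_list (map (\<lambda>f. if snd f then - \<omega> (fst f) else \<omega> (fst f)) fs)"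

lemma sfreq_Nil[simp]: "sfreq \<omega> [] = 0"
  and sfreq_Cons[simp]: "sfreq \<omega> (f#fs) = (if snd f then - \<omega> (fst f) else \<omega> (fst f)) + sfreq \<omega> fs"
  and sfreq_append[simp]: "sfreq \<omega> (fs @ gs) = sfreq \<omega> fs + sfreq \<omega> gs"
  by (simp_all add: sfreq_def)

lemma sfreq_flip[simp]: "sfreq \<omega> (map flipf fs) = - sfreq \<omega> fs"
  by (induction fs) (auto simp: flipf_def)

section \<open>Linear part\<close>

definition Avec :: "('n \<Rightarrow> complex) \<Rightarrow> complex^'n \<Rightarrow> complex^'n" where
  "Avec \<gamma> u = (\<chi> k. \<gamma> k * u $ k)"

definition gA :: "('n \<Rightarrow> complex) \<Rightarrow> 'n fac \<Rightarrow> complex" where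
  "gA \<gamma> f = (if snd f then cnj (\<gamma> (fst f)) else \<gamma> (fst f))"

lemma lin_Avec: "lin f (Avec \<gamma> u) = gA \<gamma> f * lin f u"
  by (simp add: lin_def Avec_def gA_def)

lemma Dmono_Avec: "Dmono fs u (Avec \<gamma> u) = sum_list (map (gA \<gamma>) fs) * mono fs u"
  by (induction fs) (auto simp: lin_Avec algebra_simps)

definition mu :: "('n \<Rightarrow> complex) \<Rightarrow> 'n fac list \<Rightarrow> 'n \<Rightarrow> complex" where
  "mu \<gamma> fs k = sum_list (map (gA \<gamma>) fs) - \<gamma> k"

lemma Im_mu:
  assumes "\<And>k. \<gamma> k = Complex lam (\<omega> k)"
  shows "Im (mu \<gamma> fs k) = sfreq \<omega> fs - \<omega> k"
proof -
  have "Im (sum_list (map (gA \<gamma>) fs)) = sfreq \<omega> fs"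
    by (induction fs) (auto simp: gA_def assms)
  then show ?thesis by (simp add: mu_def assms)
qed

definition solveL :: "('n \<Rightarrow> complex) \<Rightarrow> 'n \<Rightarrow> (complex \<times> 'n fac list) list \<Rightarrow> (complex \<times> 'n fac list) list" where
  "solveL \<gamma> k L = map (\<lambda>(c,fs). (c / mu \<gamma> fs k, fs)) L"

lemma solveL_eq:
  assumes "\<forall>(c,fs)\<in>set L. mu \<gamma> fs k \<noteq> 0"
  shows "sDev (solveL \<gamma> k L) u (Avec \<gamma> u) - \<gamma> k * sev (solveL \<gamma> k L) u = sev L u"
  using assms
proof (induction L)
  case Nil then show ?case by (simp add: solveL_def)
next
  case (Cons p L)
  obtain c fs where p: "p = (c,fs)" by (cases p)
  have m: "mu \<gamma> fs k \<noteq> 0" using Cons.prems p by auto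
  have "c / mu \<gamma> fs k * Dmono fs u (Avec \<gamma> u) - \<gamma> k * (c / mu \<gamma> fs k * mono fs u)
     = (c / mu \<gamma> fs k) * mu \<gamma> fs k * mono fs u"
  proof -
    have g: "x * (S * M) - g * (x * M) = x * (S - g) * M" for x S M g :: complex
      by (simp add: algebra_simps)
    show ?thesis unfolding Dmono_Avec mu_def by (rule g)
  qed
  also have "\<dots> = c * mono fs u" using m by simp
  finally have "c / mu \<gamma> fs k * Dmono fs u (Avec \<gamma> u) - \<gamma> k * (c / mu \<gamma> fs k * mono fs u) = c * mono fs u" .
  with Cons show ?case by (simp add: solveL_def p algebra_simps)
qed

lemma set_solveL: "(c,fs) \<in> set (solveL \<gamma> k L) \<Longrightarrow> \<exists>c'. (c',fs) \<in> set L"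
  by (auto simp: solveL_def)

section \<open>Cubic part\<close>

definition Nvec :: "('n \<Rightarrow> complex) \<Rightarrow> complex^'n \<Rightarrow> complex^'n" where
  "Nvec \<beta> u = (\<chi> k. - \<beta> k * u $ k * complex_of_real ((cmod (u $ k))\<^sup>2))"

lemma cmod_sq_eq: "complex_of_real ((cmod z)\<^sup>2) = z * cnj z"
  by (fact complex_norm_square)
lemma cmod_sq_eq': "(complex_of_real (cmod z))\<^sup>2 = z * cnj z"
  using complex_norm_square[of z] by simp

definition nb :: "('n \<Rightarrow> complex) \<Rightarrow> 'n fac \<Rightarrow> complex" where
  "nb \<beta> f = (if snd f then - cnj (\<beta> (fst f)) else - \<beta> (fst f))"

lemma lin_Nvec: "lin f (Nvec \<beta> u) = nb \<beta> f * mono [(fst f, False), (fst f, True)] u * lin f u"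
  by (auto simp: lin_def Nvec_def nb_def cmod_sq_eq cmod_sq_eq')

fun dnt :: "('n \<Rightarrow> complex) \<Rightarrow> 'n fac list \<Rightarrow> (complex \<times> 'n fac list) list" where
  "dnt \<beta> [] = []"
| "dnt \<beta> (f#fs) = (nb \<beta> f, (fst f, False) # (fst f, True) # f # fs) # map (\<lambda>(c,gs). (c, f#gs)) (dnt \<beta> fs)"

lemma Dmono_Nvec: "Dmono fs u (Nvec \<beta> u) = sev (dnt \<beta> fs) u"
  by (induction fs) (auto simp: lin_Nvec sev_map_cons algebra_simps)

lemma dnt_props: "(c,gs) \<in> set (dnt \<beta> fs) \<Longrightarrow> length gs = length fs + 2 \<and> sfreq \<omega> gs = sfreq \<omega> fs"
  by (induction fs arbitrary: c gs) auto

definition DNvec :: "('n \<Rightarrow> complex) \<Rightarrow> complex^'n \<Rightarrow> complex^'n \<Rightarrow> complex^'n" where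
  "DNvec \<beta> u w = (\<chi> k. - \<beta> k * (2 * u $ k * cnj (u $ k) * w $ k + u $ k * u $ k * cnj (w $ k)))"

lemma Nvec_has_derivative: "(Nvec \<beta> has_derivative DNvec \<beta> u) (at u within S)"
proof (rule has_derivative_vecI)
  fix k
  have e: "(\<lambda>u. Nvec \<beta> u $ k) = (\<lambda>u. - \<beta> k * ((u $ k * u $ k) * cnj (u $ k)))"
    by (auto simp: Nvec_def cmod_sq_eq cmod_sq_eq' fun_eq_iff)
  have l1: "((\<lambda>u. u $ k) has_derivative (\<lambda>w. w $ k)) (at u within S)"
    by (rule bounded_linear.has_derivative[OF bounded_linear_vec_nth has_derivative_ident])
  have l2: "((\<lambda>u. cnj (u $ k)) has_derivative (\<lambda>w. cnj (w $ k))) (at u within S)"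
    by (rule bounded_linear.has_derivative[OF bounded_linear_cnj l1])
  have "((\<lambda>u. - \<beta> k * ((u $ k * u $ k) * cnj (u $ k))) has_derivative
     (\<lambda>w. - \<beta> k * ((u $ k * u $ k) * cnj (w $ k) + (u $ k * w $ k + w $ k * u $ k) * cnj (u $ k)))) (at u within S)"
    by (intro has_derivative_mult_right has_derivative_mult l1 l2)
  then show "((\<lambda>u. Nvec \<beta> u $ k) has_derivative (\<lambda>w. DNvec \<beta> u w $ k)) (at u within S)"
    unfolding e by (simp add: DNvec_def algebra_simps)
qed

definition dNt :: "('n \<Rightarrow> complex) \<Rightarrow> (complex \<times> 'n fac list) list \<Rightarrow> 'n \<Rightarrow> (complex \<times> 'n fac list) list" where
  "dNt \<beta> L k = map (\<lambda>(c,fs). (-2 * \<beta> k * c, (k,False)#(k,True)#fs)) L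
     @ map (\<lambda>(c,fs). (- \<beta> k * cnj c, (k,False)#(k,False)#map flipf fs)) L"

lemma sev_dNt: "sev (dNt \<beta> L k) u = - \<beta> k * (2 * u $ k * cnj (u $ k) * sev L u + u $ k * u $ k * cnj (sev L u))"
proof -
  have a: "sev (map (\<lambda>(c,fs). (-2 * \<beta> k * c, (k,False)#(k,True)#fs)) L) u = -2 * \<beta> k * u $ k * cnj (u $ k) * sev L u"
    by (induction L) (auto simp: lin_def algebra_simps)
  have b: "sev (map (\<lambda>(c,fs). (- \<beta> k * cnj c, (k,False)#(k,False)#map flipf fs)) L) u = - \<beta> k * u $ k * u $ k * cnj (sev L u)"
    by (induction L) (auto simp: lin_def mono_flip algebra_simps)
  show ?thesis unfolding dNt_def sev_append a b by (simp add: algebra_simps)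
qed

definition negL :: "(complex \<times> 'n fac list) list \<Rightarrow> (complex \<times> 'n fac list) list" where
  "negL L = map (\<lambda>(c,gs). (- c, gs)) L"

lemma sev_negL[simp]: "sev (negL L) u = - sev L u"
  by (induction L) (auto simp: negL_def)

definition lnt :: "('n \<Rightarrow> complex) \<Rightarrow> ('n \<Rightarrow> (complex \<times> 'n fac list) list) \<Rightarrow> 'n \<Rightarrow> (complex \<times> 'n fac list) list" where
  "lnt \<beta> P k = concat (map (\<lambda>(c,fs). map (\<lambda>(c',gs). (c * c', gs)) (dnt \<beta> fs)) (P k)) @ negL (dNt \<beta> (P k) k)"

lemma ev_lnt: "Dev P u (Nvec \<beta> u) - DNvec \<beta> u (ev P u) = ev (lnt \<beta> P) u"
proof -
  have "sDev (P k) u (Nvec \<beta> u) = sev (concat (map (\<lambda>(c,fs). map (\<lambda>(c',gs). (c * c', gs)) (dnt \<beta> fs)) (P k))) u" for k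
    by (rule sDev_eq_sev_gen[OF Dmono_Nvec])
  then show ?thesis
    by (simp add: vec_eq_iff lnt_def sev_dNt DNvec_def)
qed

definition good :: "('n \<Rightarrow> real) \<Rightarrow> nat \<Rightarrow> ('n \<Rightarrow> (complex \<times> 'n fac list) list) \<Rightarrow> bool" where
  "good \<omega> d P \<longleftrightarrow> (\<forall>k. \<forall>(c,fs)\<in>set (P k). length fs \<ge> d \<and> sfreq \<omega> fs \<noteq> \<omega> k)"

lemma good_lnt: assumes "good \<omega> d P" shows "good \<omega> (d+2) (lnt \<beta> P)"
  unfolding good_def
proof (intro allI ballI, clarify)
  fix k c gs assume "(c, gs) \<in> set (lnt \<beta> P k)"
  then consider (a) c0 fs c' where "(c0,fs) \<in> set (P k)" "(c',gs) \<in> set (dnt \<beta> fs)"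
    | (b) c0 fs where "(c0,fs) \<in> set (P k)" "gs = (k,False)#(k,True)#fs"
    | (c) c0 fs where "(c0,fs) \<in> set (P k)" "gs = (k,False)#(k,False)#map flipf fs"
    by (auto simp: lnt_def negL_def dNt_def)
  then show "d + 2 \<le> length gs \<and> sfreq \<omega> gs \<noteq> \<omega> k"
  proof cases
    case a
    then show ?thesis using assms dnt_props[OF a(2), of \<omega>] unfolding good_def by fastforce
  next
    case b
    then show ?thesis using assms unfolding good_def by fastforce
  next
    case c
    then show ?thesis using assms unfolding good_def by fastforce
  qed
qed


section \<open>Substitution of a polynomial map\<close>

definition linP :: "'n fac \<Rightarrow> ('n \<Rightarrow> (complex \<times> 'n fac list) list) \<Rightarrow> (complex \<times> 'n fac list) list" where
  "linP f P = (if snd f then cnjL (P (fst f)) else P (fst f))"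

lemma lin_ev: "lin f (ev P u) = sev (linP f P) u"
  by (simp add: lin_def linP_def sev_cnjL)

fun dpt :: "'n fac list \<Rightarrow> ('n \<Rightarrow> (complex \<times> 'n fac list) list) \<Rightarrow> (complex \<times> 'n fac list) list" where
  "dpt [] P = []"
| "dpt (f#fs) P = map (\<lambda>(c,gs). (c, gs @ fs)) (linP f P) @ map (\<lambda>(c,gs). (c, f#gs)) (dpt fs P)"

lemma Dmono_ev: "Dmono fs u (ev P u) = sev (dpt fs P) u"
  by (induction fs) (auto simp: lin_ev sev_map_app sev_map_cons algebra_simps)

lemma linP_len: "(c,gs) \<in> set (linP f P) \<Longrightarrow> \<exists>c'. (c',gs) \<in> set (P (fst f)) \<or> (\<exists>hs. gs = map flipf hs \<and> (c',hs) \<in> set (P (fst f)))"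
  by (auto simp: linP_def cnjL_def split: if_splits)

lemma dpt_len:
  assumes "\<forall>k. \<forall>(c,gs)\<in>set (P k). length gs \<ge> 2"
  shows "(c,gs) \<in> set (dpt fs P) \<Longrightarrow> length gs \<ge> length fs + 1"
proof (induction fs arbitrary: c gs)
  case Nil then show ?case by simp
next
  case (Cons f fs)
  from Cons.prems consider (a) gs' where "(c,gs') \<in> set (linP f P)" "gs = gs' @ fs"
    | (b) gs' where "(c,gs') \<in> set (dpt fs P)" "gs = f # gs'"
    by auto
  then show ?case
  proof cases
    case a
    from linP_len[OF a(1)] obtain c' where "(c',gs') \<in> set (P (fst f)) \<or> (\<exists>hs. gs' = map flipf hs \<and> (c',hs) \<in> set (P (fst f)))" by blast
    then have "length gs' \<ge> 2" using assms by fastforce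
    then show ?thesis using a by simp
  next
    case b
    then show ?thesis using Cons.IH[of c gs'] by simp
  qed
qed

definition rho :: "'n fac list \<Rightarrow> complex^'n \<Rightarrow> complex^'n \<Rightarrow> complex" where
  "rho fs u w = mono fs (u + w) - mono fs u - Dmono fs u w"

lemma rho_Cons: "rho (f#fs) u w = (lin f u + lin f w) * rho fs u w + lin f w * Dmono fs u w"
  by (simp add: rho_def lin_add algebra_simps)

lemma rho_short: "length fs \<le> 1 \<Longrightarrow> rho fs u w = 0"
  by (cases fs) (auto simp: rho_def lin_add)

lemma rho_bound: "cmod (rho fs u w) \<le> real (length fs)^2 * (norm u + norm w) ^ (length fs - 2) * (norm w)^2"
proof (induction fs)
  case Nil then show ?case by (simp add: rho_def)
next
  case (Cons f fs)
  let ?n = "length fs"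
  let ?s = "norm u + norm w"
  show ?case
  proof (cases "?n \<le> 1")
    case True
    then have "rho fs u w = 0" by (rule rho_short)
    then have "cmod (rho (f#fs) u w) = cmod (lin f w * Dmono fs u w)" by (simp add: rho_Cons)
    also have "\<dots> \<le> norm w * (real ?n * norm u ^ (?n - 1) * norm w)"
      unfolding norm_mult by (intro mult_mono lin_norm Dmono_norm) auto
    also have "\<dots> \<le> real (length (f#fs))^2 * ?s ^ (length (f#fs) - 2) * (norm w)^2"
      using True by (cases "?n") (auto simp: power2_eq_square)
    finally show ?thesis .
  next
    case False
    have s0: "?s \<ge> 0" by simp
    have a: "cmod ((lin f u + lin f w) * rho fs u w) \<le> ?s * (real ?n ^ 2 * ?s ^ (?n - 2) * (norm w)^2)"
      unfolding norm_mult
      by (intro mult_mono Cons.IH) (auto intro: order_trans[OF norm_triangle_ineq] add_mono lin_norm)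
    have b: "cmod (lin f w * Dmono fs u w) \<le> norm w * (real ?n * ?s ^ (?n - 1) * norm w)"
      unfolding norm_mult
      by (intro mult_mono lin_norm order_trans[OF Dmono_norm] mult_right_mono mult_left_mono power_mono) auto
    have nn: "?n - 1 = Suc (?n - 2)" using False by arith
    have e1: "?s * (real ?n ^ 2 * ?s ^ (?n - 2) * (norm w)^2) = real ?n ^ 2 * ?s ^ (?n - 1) * (norm w)^2"
      unfolding nn by (simp add: algebra_simps)
    have e2: "norm w * (real ?n * ?s ^ (?n - 1) * norm w) = real ?n * ?s ^ (?n - 1) * (norm w)^2"
      by (simp add: power2_eq_square)
    have "cmod (rho (f#fs) u w) \<le> real ?n ^ 2 * ?s ^ (?n - 1) * (norm w)^2 + real ?n * ?s ^ (?n - 1) * (norm w)^2"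
      unfolding rho_Cons using a b e1 e2 norm_triangle_ineq
      by (smt (verit, ccfv_threshold))
    also have "\<dots> \<le> real (length (f#fs))^2 * ?s ^ (length (f#fs) - 2) * (norm w)^2"
    proof -
      have "real ?n ^ 2 + real ?n \<le> real (Suc ?n) ^ 2" by (simp add: power2_eq_square algebra_simps)
      then have "(real ?n ^ 2 + real ?n) * (?s ^ (?n - 1) * (norm w)^2) \<le> real (Suc ?n) ^ 2 * (?s ^ (?n - 1) * (norm w)^2)"
        by (intro mult_right_mono) auto
      then show ?thesis by (simp add: algebra_simps)
    qed
    finally show ?thesis .
  qed
qed

lemma rho_bound1:
  assumes "norm u + norm w \<le> 1" "length fs \<ge> 2"
  shows "cmod (rho fs u w) \<le> real (length fs)^2 * (norm w)^2"
proof -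
  have "(norm u + norm w) ^ (length fs - 2) \<le> 1" using assms by (intro power_le_one) auto
  then have "real (length fs)^2 * (norm u + norm w) ^ (length fs - 2) * (norm w)^2 \<le> real (length fs)^2 * 1 * (norm w)^2"
    by (intro mult_right_mono mult_left_mono) auto
  then show ?thesis using rho_bound[of fs u w] by simp
qed

definition srho :: "(complex \<times> 'n fac list) list \<Rightarrow> complex^'n \<Rightarrow> complex^'n \<Rightarrow> complex" where
  "srho L u w = sum_list (map (\<lambda>(c,fs). c * rho fs u w) L)"

lemma sev_expand: "sev L (u + w) = sev L u + sDev L u w + srho L u w"
  by (induction L) (auto simp: srho_def rho_def algebra_simps)

definition cwq :: "(complex \<times> 'n fac list) list \<Rightarrow> real" where
  "cwq L = sum_list (map (\<lambda>(c,fs). cmod c * real (length fs)^2) L)"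

lemma srho_bound:
  assumes "\<forall>(c,fs)\<in>set L. length fs \<ge> 2" "norm u + norm w \<le> 1"
  shows "cmod (srho L u w) \<le> cwq L * (norm w)^2"
  using assms(1)
proof (induction L)
  case Nil then show ?case by (simp add: srho_def cwq_def)
next
  case (Cons p L)
  obtain c fs where p: "p = (c,fs)" by (cases p)
  have "cmod (c * rho fs u w) \<le> cmod c * (real (length fs)^2 * (norm w)^2)"
    unfolding norm_mult using Cons.prems p by (intro mult_left_mono rho_bound1 assms) auto
  moreover have "cmod (srho L u w) \<le> cwq L * (norm w)^2" using Cons by auto
  moreover have "cmod (srho (p#L) u w) \<le> cmod (c * rho fs u w) + cmod (srho L u w)"
    by (simp add: p srho_def norm_triangle_ineq)
  ultimately show ?case by (simp add: p cwq_def distrib_right)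
qed

section \<open>Representation as zzbar polynomials\<close>

definition cntF :: "'n fac list \<Rightarrow> 'n \<Rightarrow> nat" where
  "cntF gs j = length (filter (\<lambda>f. f = (j,False)) gs)"
definition cntT :: "'n fac list \<Rightarrow> 'n \<Rightarrow> nat" where
  "cntT gs j = length (filter (\<lambda>f. f = (j,True)) gs)"

lemma zzbar_monomial_incF:
  "zzbar_monomial (\<lambda>i. (if i = j then 1 else 0) + s i) t u = u $ j * zzbar_monomial s t u"
proof -
  have "zzbar_monomial (\<lambda>i. (if i = j then 1 else 0) + s i) t u
      = (\<Prod>i\<in>UNIV. (if i = j then u $ i else 1) * ((u $ i) ^ s i * cnj (u $ i) ^ t i))"
    unfolding zzbar_monomial_def by (intro prod.cong) (auto simp: power_add)
  also have "\<dots> = (\<Prod>i\<in>UNIV. (if i = j then u $ i else 1)) * zzbar_monomial s t u"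
    unfolding zzbar_monomial_def prod.distrib ..
  also have "(\<Prod>i\<in>UNIV. (if i = j then u $ i else 1)) = u $ j"
    by (simp add: prod.delta)
  finally show ?thesis .
qed

lemma zzbar_monomial_incT:
  "zzbar_monomial s (\<lambda>i. (if i = j then 1 else 0) + t i) u = cnj (u $ j) * zzbar_monomial s t u"
proof -
  have "zzbar_monomial s (\<lambda>i. (if i = j then 1 else 0) + t i) u
      = (\<Prod>i\<in>UNIV. (if i = j then cnj (u $ i) else 1) * ((u $ i) ^ s i * cnj (u $ i) ^ t i))"
    unfolding zzbar_monomial_def by (intro prod.cong) (auto simp: power_add)
  also have "\<dots> = (\<Prod>i\<in>UNIV. (if i = j then cnj (u $ i) else 1)) * zzbar_monomial s t u"
    unfolding zzbar_monomial_def prod.distrib ..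
  also have "(\<Prod>i\<in>UNIV. (if i = j then cnj (u $ i) else 1)) = cnj (u $ j)"
    by (simp add: prod.delta)
  finally show ?thesis .
qed

lemma mono_zzbar: "mono gs u = zzbar_monomial (cntF gs) (cntT gs) u"
proof (induction gs)
  case Nil
  then show ?case by (simp add: zzbar_monomial_def cntF_def cntT_def)
next
  case (Cons f gs)
  obtain j b where f: "f = (j,b)" by (cases f)
  show ?case
  proof (cases b)
    case True
    have "cntT (f#gs) = (\<lambda>i. (if i = j then 1 else 0) + cntT gs i)" "cntF (f#gs) = cntF gs"
      by (auto simp: cntT_def cntF_def f True fun_eq_iff)
    then show ?thesis using Cons by (simp add: zzbar_monomial_incT f True lin_def)
  next
    case False
    have "cntF (f#gs) = (\<lambda>i. (if i = j then 1 else 0) + cntF gs i)" "cntT (f#gs) = cntT gs"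
      by (auto simp: cntT_def cntF_def f False fun_eq_iff)
    then show ?thesis using Cons by (simp add: zzbar_monomial_incF f False lin_def)
  qed
qed

lemma degree_cnt: "monomial_degree (cntF gs) (cntT gs) = length gs"
proof (induction gs)
  case Nil then show ?case by (simp add: monomial_degree_def cntF_def cntT_def)
next
  case (Cons f gs)
  obtain j b where f: "f = (j,b)" by (cases f)
  have "monomial_degree (cntF (f#gs)) (cntT (f#gs))
     = (\<Sum>i\<in>UNIV. (if i = j then 1 else 0) + (cntF gs i + cntT gs i))"
    unfolding monomial_degree_def by (intro sum.cong) (auto simp: cntF_def cntT_def f)
  also have "\<dots> = 1 + monomial_degree (cntF gs) (cntT gs)"
    by (simp add: sum.distrib monomial_degree_def)
  finally show ?case using Cons by simp
qed

definition repc :: "(complex \<times> 'n fac list) list \<Rightarrow> ('n \<Rightarrow> nat) \<times> ('n \<Rightarrow> nat) \<Rightarrow> complex" where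
  "repc L p = sum_list (map (\<lambda>(c,gs). if (cntF gs, cntT gs) = p then c else 0) L)"

lemma repc_nz: "repc L p \<noteq> 0 \<Longrightarrow> \<exists>c gs. (c,gs) \<in> set L \<and> (cntF gs, cntT gs) = p"
proof (induction L)
  case Nil then show ?case by (simp add: repc_def)
next
  case (Cons x L)
  obtain c gs where x: "x = (c,gs)" by (cases x)
  show ?case
  proof (cases "(cntF gs, cntT gs) = p")
    case True then show ?thesis using x by auto
  next
    case False
    then have "repc L p \<noteq> 0" using Cons.prems by (simp add: repc_def x)
    then show ?thesis using Cons.IH by auto
  qed
qed

lemma repc_sum:
  assumes "finite S" "(\<lambda>(c,gs). (cntF gs, cntT gs)) ` set L \<subseteq> S"
  shows "(\<Sum>p\<in>S. repc L p * zzbar_monomial (fst p) (snd p) u) = sev L u"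
  using assms(2)
proof (induction L)
  case Nil then show ?case by (simp add: repc_def)
next
  case (Cons x L)
  obtain c gs where x: "x = (c,gs)" by (cases x)
  have mem: "(cntF gs, cntT gs) \<in> S" using Cons.prems x by auto
  have "(\<Sum>p\<in>S. repc (x#L) p * zzbar_monomial (fst p) (snd p) u)
      = (\<Sum>p\<in>S. (if (cntF gs, cntT gs) = p then c * zzbar_monomial (fst p) (snd p) u else 0))
        + (\<Sum>p\<in>S. repc L p * zzbar_monomial (fst p) (snd p) u)"
    unfolding sum.distrib[symmetric] by (intro sum.cong) (auto simp: repc_def x distrib_right)
  also have "(\<Sum>p\<in>S. (if (cntF gs, cntT gs) = p then c * zzbar_monomial (fst p) (snd p) u else 0))
      = c * mono gs u"
    using mem assms(1) by (simp add: sum.delta mono_zzbar)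
  finally show ?case using Cons x by simp
qed

lemma zzbar_poly_superset:
  assumes "finite S" "{p. c p \<noteq> 0} \<subseteq> S"
  shows "zzbar_poly c z = (\<Sum>p\<in>S. c p * zzbar_monomial (fst p) (snd p) z)"
  unfolding zzbar_poly_def using assms by (intro sum.mono_neutral_left) auto

lemma repc_repr: "is_zzbar_poly_repr (repc L) (sev L)"
proof -
  let ?S = "(\<lambda>(c,gs). (cntF gs, cntT gs)) ` set L"
  have sub: "{p. repc L p \<noteq> 0} \<subseteq> ?S"
    using repc_nz by fastforce
  have fin: "finite ?S" by simp
  show ?thesis
    unfolding is_zzbar_poly_repr_def
    using finite_subset[OF sub fin] zzbar_poly_superset[OF fin sub] repc_sum[OF fin] by auto
qed

lemma repc_degree:
  assumes "\<forall>(c,gs)\<in>set L. length gs \<ge> d" "repc L (s,t) \<noteq> 0"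
  shows "monomial_degree s t \<ge> d"
proof -
  obtain c gs where "(c,gs) \<in> set L" "(cntF gs, cntT gs) = (s,t)" using repc_nz[OF assms(2)] by blast
  then show ?thesis using assms(1) degree_cnt[of gs] by auto
qed

section \<open>Smoothness of polynomial maps\<close>

fun dmt :: "'n fac list \<Rightarrow> complex^'n \<Rightarrow> (complex \<times> 'n fac list) list" where
  "dmt [] v = []"
| "dmt (f#fs) v = (lin f v, fs) # map (\<lambda>(c,gs). (c, f#gs)) (dmt fs v)"

lemma Dmono_dmt: "Dmono fs x v = sev (dmt fs v) x"
  by (induction fs) (auto simp: sev_map_cons)

definition dQ :: "('n \<Rightarrow> (complex \<times> 'n fac list) list) \<Rightarrow> complex^'n \<Rightarrow> 'n \<Rightarrow> (complex \<times> 'n fac list) list" where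
  "dQ Q v k = concat (map (\<lambda>(c,fs). map (\<lambda>(c',gs). (c * c', gs)) (dmt fs v)) (Q k))"

lemma Dev_dQ: "Dev Q x v = ev (dQ Q v) x"
  by (simp add: vec_eq_iff dQ_def sDev_eq_sev_gen[OF Dmono_dmt])

lemma ev_line_vd: "((\<lambda>t. ev Q (x + t *\<^sub>R v)) has_vector_derivative Dev Q (x + s *\<^sub>R v) v) (at s)"
proof -
  have l: "((\<lambda>t. x + t *\<^sub>R v) has_derivative (\<lambda>t. t *\<^sub>R v)) (at s)"
    by (intro derivative_eq_intros) auto
  have "((\<lambda>t. ev Q (x + t *\<^sub>R v)) has_derivative (\<lambda>t. Dev Q (x + s *\<^sub>R v) (t *\<^sub>R v))) (at s)"
    using diff_chain_at[OF l ev_has_derivative] by (simp add: o_def)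
  moreover have "Dev Q (x + s *\<^sub>R v) (t *\<^sub>R v) = t *\<^sub>R Dev Q (x + s *\<^sub>R v) v" for t
    using linear_Dev linear_scale by blast
  ultimately show ?thesis by (simp add: has_vector_derivative_def)
qed

lemma dirderiv_ev: "dirderiv (ev Q) v x = Dev Q x v"
  unfolding dirderiv_def using vector_derivative_at[OF ev_line_vd[of Q x v 0]] by simp

fun Qi :: "('n \<Rightarrow> (complex \<times> 'n fac list) list) \<Rightarrow> (complex^'n) list \<Rightarrow> 'n \<Rightarrow> (complex \<times> 'n fac list) list" where
  "Qi Q [] = Q"
| "Qi Q (v#vs) = dQ (Qi Q vs) v"

lemma iter_ev: "iter_dirderiv (ev Q) vs = ev (Qi Q vs)"
proof (induction vs)
  case Nil then show ?case by simp
next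
  case (Cons v vs)
  have "iter_dirderiv (ev Q) (v#vs) = dirderiv (ev (Qi Q vs)) v" using Cons by simp
  then show ?case by (simp add: fun_eq_iff dirderiv_ev Dev_dQ)
qed

lemma smooth_ev: "smooth_map (ev Q)"
  unfolding smooth_map_def iter_ev
proof (intro conjI allI)
  fix vs
  show "continuous_on UNIV (ev (Qi Q vs))"
    by (intro continuous_at_imp_continuous_on ballI has_derivative_continuous[OF ev_has_derivative])
next
  fix vs v x
  show "(\<lambda>t. ev (Qi Q vs) (x + t *\<^sub>R v)) differentiable at 0"
    using ev_line_vd[of "Qi Q vs" x v 0]
    by (auto simp: differentiable_def has_vector_derivative_def)
qed




lemma o2_has_derivative:
  fixes f :: "'a::real_normed_vector \<Rightarrow> 'b::real_normed_vector"
  assumes M: "\<And>x. norm x \<le> 1 \<Longrightarrow> norm (f x) \<le> M * norm x ^ 2"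
  shows "(f has_derivative (\<lambda>_. 0)) (at 0)"
  unfolding has_derivative_at_alt
proof (intro conjI allI impI)
  show "bounded_linear (\<lambda>_. 0::'b)" by simp
next
  fix e :: real assume e: "e > 0"
  have f0: "f 0 = 0" using M[of 0] by simp
  define M' where "M' = max M 0"
  have M0: "M' \<ge> 0" by (simp add: M'_def)
  have M': "norm (f x) \<le> M' * norm x ^ 2" if "norm x \<le> 1" for x
    using M[OF that] by (smt (verit, best) M'_def mult_right_mono zero_le_power2 norm_ge_zero max.cobounded1)
  define d where "d = min 1 (e / (M' + 1))"
  have d: "d > 0" using e M0 by (simp add: d_def)
  show "\<exists>d>0. \<forall>y. norm (y - 0) < d \<longrightarrow> norm (f y - f 0 - 0) \<le> e * norm (y - 0)"
  proof (intro exI[of _ d] conjI allI impI d)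
    fix y :: 'a assume y: "norm (y - 0) < d"
    then have y1: "norm y \<le> 1" and y2: "norm y \<le> e / (M' + 1)" by (auto simp: d_def)
    have "norm (f y) \<le> M' * norm y ^ 2" using M'[OF y1] .
    also have "\<dots> = (M' * norm y) * norm y" by (simp add: power2_eq_square)
    also have "\<dots> \<le> e * norm y"
    proof (intro mult_right_mono)
      have "M' * norm y \<le> M' * (e / (M' + 1))" using y2 M0 by (intro mult_left_mono) auto
      also have "\<dots> \<le> e" using M0 e by (simp add: field_simps)
      finally show "M' * norm y \<le> e" .
    qed simp
    finally show "norm (f y - f 0 - 0) \<le> e * norm (y - 0)" by (simp add: f0)
  qed
qed

lemma ev_append: "ev (\<lambda>k. A k @ B k) u = ev A u + ev B u"
  by (simp add: vec_eq_iff)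
lemma Dev_append: "Dev (\<lambda>k. A k @ B k) u w = Dev A u w + Dev B u w"
  by (simp add: vec_eq_iff)

lemma Dmono_len1: "length fs = 1 \<Longrightarrow> Dmono fs x w = mono fs w"
  by (cases fs) auto

lemma low_vanish:
  fixes Q :: "'n::finite \<Rightarrow> (complex \<times> 'n fac list) list"
  assumes len: "\<forall>k. \<forall>(a,gs)\<in>set (Q k). length gs \<le> 1"
    and d: "(ev Q has_derivative (\<lambda>_. 0)) (at 0)" and z: "ev Q 0 = 0"
  shows "ev Q x = 0"
proof -
  define P where "P = (\<lambda>(a::complex,gs::'n fac list). length gs = 0)"
  define Q0 where "Q0 k = filter P (Q k)" for k
  define Q1 where "Q1 k = filter (\<lambda>x. \<not> P x) (Q k)" for k
  have split: "ev Q y = ev Q0 y + ev Q1 y" for y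
    unfolding Q0_def Q1_def by (simp only: vec_eq_iff ev_nth vector_add_component sev_filter[of "Q _" y P] simp_thms)
  have l1: "\<forall>(a,gs)\<in>set (Q1 k). length gs = 1" for k
  proof (intro ballI, clarify)
    fix a gs assume "(a,gs) \<in> set (Q1 k)"
    then have "(a,gs) \<in> set (Q k)" "length gs \<noteq> 0" by (auto simp: Q1_def P_def)
    moreover have "length gs \<le> 1" using len \<open>(a,gs) \<in> set (Q k)\<close> by blast
    ultimately show "length gs = 1" by linarith
  qed
  have c0: "ev Q0 y = ev Q0 0" for y
  proof -
    have "sev L y = sev L 0" if "\<forall>(a,gs)\<in>set L. length gs = 0" for L :: "(complex \<times> 'n fac list) list"
      using that by (induction L) auto
    then show ?thesis by (simp add: vec_eq_iff Q0_def P_def)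
  qed
  have q10: "ev Q1 0 = 0"
  proof -
    have "sev L 0 = 0" if "\<forall>(a,gs)\<in>set L. length gs = 1" for L :: "(complex \<times> 'n fac list) list"
      using that by (induction L) (auto simp: length_Suc_conv lin_def)
    then show ?thesis using l1 by (simp add: vec_eq_iff)
  qed
  have q00: "ev Q0 0 = 0" using z split[of 0] q10 by simp
  have dev1: "Dev Q1 0 w = ev Q1 w" for w
  proof -
    have "sDev L 0 w = sev L w" if "\<forall>(a,gs)\<in>set L. length gs = 1" for L :: "(complex \<times> 'n fac list) list"
      using that by (induction L) (auto simp: Dmono_len1)
    then show ?thesis using l1 by (simp add: vec_eq_iff)
  qed
  have "(ev Q1 has_derivative ev Q1) (at 0)"
  proof -
    have "Dev Q1 0 = ev Q1" using dev1 by (rule ext)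
    then show ?thesis using ev_has_derivative[of Q1 0 UNIV] by simp
  qed
  moreover have "(ev Q1 has_derivative (\<lambda>_. 0)) (at 0)"
  proof -
    have "ev Q1 = (\<lambda>y. ev Q y)" using split c0 q00 by (simp add: fun_eq_iff)
    then show ?thesis using d by simp
  qed
  ultimately have "ev Q1 = (\<lambda>_. 0)" by (rule has_derivative_unique)
  then show ?thesis using split c0 q00 by (simp add: fun_eq_iff)
qed

definition lst :: "'n list \<Rightarrow> ('n \<Rightarrow> nat) \<Rightarrow> ('n \<Rightarrow> nat) \<Rightarrow> 'n fac list" where
  "lst js s t = concat (map (\<lambda>j. replicate (s j) (j,False) @ replicate (t j) (j,True)) js)"

lemma mono_concat: "mono (concat Ls) u = prod_list (map (\<lambda>L. mono L u) Ls)"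
  by (induction Ls) auto

lemma mono_replicate: "mono (replicate m f) u = lin f u ^ m"
  by (induction m) auto

lemma mono_lst:
  fixes js :: "'n::finite list"
  assumes "distinct js" "set js = UNIV"
  shows "mono (lst js s t) u = zzbar_monomial s t u"
proof -
  have "mono (lst js s t) u = prod_list (map (\<lambda>j. (u $ j) ^ s j * cnj (u $ j) ^ t j) js)"
    unfolding lst_def mono_concat by (simp add: o_def mono_replicate lin_def)
  also have "\<dots> = (\<Prod>j\<in>UNIV. (u $ j) ^ s j * cnj (u $ j) ^ t j)"
    using assms prod.distinct_set_conv_list[of js "\<lambda>j. (u $ j) ^ s j * cnj (u $ j) ^ t j"] by simp
  finally show ?thesis by (simp add: zzbar_monomial_def)
qed

lemma sfreq_replicate: "sfreq \<omega> (replicate m f) = real m * (if snd f then - \<omega> (fst f) else \<omega> (fst f))"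
  by (induction m) (auto simp: algebra_simps)

lemma sfreq_lst:
  fixes js :: "'n::finite list"
  assumes "distinct js" "set js = UNIV"
  shows "sfreq \<omega> (lst js s t) = (\<Sum>j\<in>UNIV. real (s j) * \<omega> j) - (\<Sum>j\<in>UNIV. real (t j) * \<omega> j)"
proof -
  have c: "sfreq \<omega> (concat Ls) = sum_list (map (sfreq \<omega>) Ls)" for Ls
    by (induction Ls) auto
  have "sfreq \<omega> (lst js s t) = sum_list (map (\<lambda>j. real (s j) * \<omega> j - real (t j) * \<omega> j) js)"
    unfolding lst_def c by (simp add: o_def sfreq_replicate)
  also have "\<dots> = (\<Sum>j\<in>UNIV. real (s j) * \<omega> j - real (t j) * \<omega> j)"
    using assms by (simp add: sum_list_distinct_conv_sum_set)
  finally show ?thesis by (simp add: sum_subtractf)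
qed

lemma terms_of_repr:
  fixes c :: "('n::finite \<Rightarrow> nat) \<times> ('n \<Rightarrow> nat) \<Rightarrow> complex"
  assumes "is_zzbar_poly_repr c f"
  shows "\<exists>L. (\<forall>z. f z = sev L z) \<and> (\<forall>a gs. (a,gs) \<in> set L \<longrightarrow>
     (\<exists>s t. c (s,t) \<noteq> 0 \<and> (\<forall>\<omega>. sfreq \<omega> gs = (\<Sum>j\<in>UNIV. real (s j) * \<omega> j) - (\<Sum>j\<in>UNIV. real (t j) * \<omega> j))))"
proof -
  have fin: "finite {p. c p \<noteq> 0}" and fz: "\<And>z. f z = zzbar_poly c z"
    using assms by (auto simp: is_zzbar_poly_repr_def)
  obtain ps where ps: "distinct ps" "set ps = {p. c p \<noteq> 0}" using finite_distinct_list[OF fin] by blast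
  obtain js :: "'n list" where js: "distinct js" "set js = UNIV" using finite_distinct_list[of "UNIV :: 'n set"] by auto
  define L where "L = map (\<lambda>p. (c p, lst js (fst p) (snd p))) ps"
  show ?thesis
  proof (intro exI[of _ L] conjI allI impI)
    fix z
    have "sev L z = sum_list (map (\<lambda>p. c p * zzbar_monomial (fst p) (snd p) z) ps)"
      by (simp add: L_def sev_def o_def mono_lst[OF js] case_prod_beta)
    also have "\<dots> = (\<Sum>p\<in>{p. c p \<noteq> 0}. c p * zzbar_monomial (fst p) (snd p) z)"
      using ps by (simp add: sum_list_distinct_conv_sum_set)
    finally show "f z = sev L z" by (simp add: fz zzbar_poly_def)
  next
    fix a gs assume "(a,gs) \<in> set L"
    then obtain p where "p \<in> set ps" "gs = lst js (fst p) (snd p)" by (auto simp: L_def)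
    then show "\<exists>s t. c (s,t) \<noteq> 0 \<and> (\<forall>\<omega>. sfreq \<omega> gs = (\<Sum>j\<in>UNIV. real (s j) * \<omega> j) - (\<Sum>j\<in>UNIV. real (t j) * \<omega> j))"
      using ps sfreq_lst[OF js] by (intro exI[of _ "fst p"] exI[of _ "snd p"]) auto
  qed
qed

lemma DNvec_add: "DNvec \<beta> u (a + b) = DNvec \<beta> u a + DNvec \<beta> u b"
  by (simp add: DNvec_def vec_eq_iff algebra_simps)

lemma DNvec_scaleR: "DNvec \<beta> u (r *\<^sub>R a) = r *\<^sub>R DNvec \<beta> u a"
  apply (simp only: DNvec_def vec_eq_iff vector_scaleR_component vec_lambda_beta)
  apply (simp add: scaleR_conv_of_real algebra_simps)
  done


definition N2 :: "('n::finite \<Rightarrow> complex) \<Rightarrow> complex^'n \<Rightarrow> complex^'n \<Rightarrow> complex^'n" where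
  "N2 \<beta> u p = (\<chi> k. - \<beta> k * (2 * u $ k * p $ k * cnj (p $ k) + p $ k * p $ k * cnj (u $ k)))"

lemma Nvec_expand:
  "Nvec \<beta> (u + a *\<^sub>R p) = Nvec \<beta> u + a *\<^sub>R DNvec \<beta> u p + (a^2) *\<^sub>R N2 \<beta> u p + (a^3) *\<^sub>R Nvec \<beta> p"
proof -
  have "Nvec \<beta> (u + a *\<^sub>R p) $ k = (Nvec \<beta> u + a *\<^sub>R DNvec \<beta> u p + (a^2) *\<^sub>R N2 \<beta> u p + (a^3) *\<^sub>R Nvec \<beta> p) $ k" for k
  proof -
    have e: "(u + a *\<^sub>R p) $ k = u $ k + of_real a * p $ k"
      by (simp only: vector_add_component vector_scaleR_component) (simp add: scaleR_conv_of_real)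
    show ?thesis
      apply (simp only: vector_add_component vector_scaleR_component Nvec_def DNvec_def N2_def vec_lambda_beta e)
      apply (simp only: cmod_sq_eq)
      apply (simp add: scaleR_conv_of_real algebra_simps power2_eq_square power3_eq_cube)
      done
  qed
  then show ?thesis by (simp add: vec_eq_iff)
qed

lemma N2_bound: "norm (N2 \<beta> u p) \<le> 3 * (\<Sum>k\<in>UNIV. cmod (\<beta> k)) * norm u * (norm p)^2"
proof -
  have c: "cmod (N2 \<beta> u p $ k) \<le> cmod (\<beta> k) * (3 * norm u * (norm p)^2)" for k
  proof -
    have uk: "cmod (u $ k) \<le> norm u" and pk: "cmod (p $ k) \<le> norm p"
      by (simp_all add: Finite_Cartesian_Product.norm_nth_le)
    have "cmod (2 * u $ k * p $ k * cnj (p $ k) + p $ k * p $ k * cnj (u $ k))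
        \<le> 2 * cmod (u $ k) * cmod (p $ k) * cmod (p $ k) + cmod (p $ k) * cmod (p $ k) * cmod (u $ k)"
      by (rule order_trans[OF norm_triangle_ineq]) (simp add: norm_mult)
    also have "\<dots> \<le> 2 * norm u * norm p * norm p + norm p * norm p * norm u"
      using uk pk by (intro add_mono mult_mono) auto
    also have "\<dots> = 3 * norm u * (norm p)^2" by (simp add: power2_eq_square algebra_simps)
    finally have i: "cmod (2 * u $ k * p $ k * cnj (p $ k) + p $ k * p $ k * cnj (u $ k)) \<le> 3 * norm u * (norm p)^2" .
    have "cmod (N2 \<beta> u p $ k) = cmod (\<beta> k) * cmod (2 * u $ k * p $ k * cnj (p $ k) + p $ k * p $ k * cnj (u $ k))"
      by (simp add: N2_def norm_mult)
    also have "\<dots> \<le> cmod (\<beta> k) * (3 * norm u * (norm p)^2)" using i by (intro mult_left_mono) auto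
    finally show ?thesis .
  qed
  have "norm (N2 \<beta> u p) \<le> (\<Sum>k\<in>UNIV. cmod (N2 \<beta> u p $ k))" by (rule norm_vec_le_sum)
  also have "\<dots> \<le> (\<Sum>k\<in>UNIV. cmod (\<beta> k) * (3 * norm u * (norm p)^2))" by (intro sum_mono c)
  also have "\<dots> = (\<Sum>k\<in>UNIV. cmod (\<beta> k)) * (3 * norm u * (norm p)^2)" by (rule sum_distrib_right[symmetric])
  finally show ?thesis by (simp add: algebra_simps)
qed

lemma Nvec_bound: "norm (Nvec \<beta> p) \<le> (\<Sum>k\<in>UNIV. cmod (\<beta> k)) * (norm p)^3"
proof -
  have c: "cmod (Nvec \<beta> p $ k) \<le> cmod (\<beta> k) * (norm p)^3" for k
  proof -
    have pk: "cmod (p $ k) \<le> norm p" by (simp add: Finite_Cartesian_Product.norm_nth_le)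
    have "cmod (Nvec \<beta> p $ k) = cmod (\<beta> k) * cmod (p $ k) ^ 3"
      by (simp add: Nvec_def norm_mult power3_eq_cube power2_eq_square)
    also have "\<dots> \<le> cmod (\<beta> k) * (norm p)^3" using pk by (intro mult_left_mono power_mono) auto
    finally show ?thesis .
  qed
  have "norm (Nvec \<beta> p) \<le> (\<Sum>k\<in>UNIV. cmod (Nvec \<beta> p $ k))" by (rule norm_vec_le_sum)
  also have "\<dots> \<le> (\<Sum>k\<in>UNIV. cmod (\<beta> k) * (norm p)^3)" by (intro sum_mono c)
  finally show ?thesis by (simp add: sum_distrib_right)
qed

lemma Avec_add: "Avec \<gamma> (u + v) = Avec \<gamma> u + Avec \<gamma> v"
  by (simp add: Avec_def vec_eq_iff algebra_simps)
lemma Avec_scaleR: "Avec \<gamma> (a *\<^sub>R v) = a *\<^sub>R Avec \<gamma> v"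
  apply (simp only: Avec_def vec_eq_iff vector_scaleR_component vec_lambda_beta)
  apply (simp add: scaleR_conv_of_real algebra_simps)
  done

lemma good_solveL: "good \<omega> d L \<Longrightarrow> good \<omega> d (\<lambda>k. solveL \<gamma> k (L k))"
  unfolding good_def by (fastforce simp: solveL_def)

lemma good_negL: "good \<omega> d L \<Longrightarrow> good \<omega> d (\<lambda>k. negL (L k))"
  unfolding good_def by (fastforce simp: negL_def)

lemma good_filter: "good \<omega> d L \<Longrightarrow> good \<omega> d (\<lambda>k. filter Q (L k))"
  unfolding good_def by auto

lemma good_append: "good \<omega> d A \<Longrightarrow> good \<omega> d B \<Longrightarrow> good \<omega> d (\<lambda>k. A k @ B k)"
  unfolding good_def by auto

lemma good_mono: "good \<omega> d A \<Longrightarrow> d' \<le> d \<Longrightarrow> good \<omega> d' A"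
  unfolding good_def by fastforce

lemma good_len: "good \<omega> d A \<Longrightarrow> \<forall>k. \<forall>(c,fs)\<in>set (A k). length fs \<ge> d"
  unfolding good_def by fastforce

lemma good_mu:
  assumes "\<And>k. \<gamma> k = Complex lam (\<omega> k)" "good \<omega> d A"
  shows "\<forall>(c,fs)\<in>set (A k). mu \<gamma> fs k \<noteq> 0"
proof (clarify)
  fix c fs assume "(c,fs) \<in> set (A k)" "mu \<gamma> fs k = 0"
  then have "Im (mu \<gamma> fs k) = 0" by simp
  then have "sfreq \<omega> fs = \<omega> k" using Im_mu[of \<gamma> lam \<omega> fs k] assms(1) by simp
  then show False using assms(2) \<open>(c,fs) \<in> set (A k)\<close> unfolding good_def by fastforce
qed

lemma homol:
  assumes "\<And>k. \<gamma> k = Complex lam (\<omega> k)" "good \<omega> d A"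
  shows "Dev (\<lambda>k. solveL \<gamma> k (A k)) u (Avec \<gamma> u) - Avec \<gamma> (ev (\<lambda>k. solveL \<gamma> k (A k)) u) = ev A u"
proof -
  have "sDev (solveL \<gamma> k (A k)) u (Avec \<gamma> u) - \<gamma> k * sev (solveL \<gamma> k (A k)) u = sev (A k) u" for k
    by (rule solveL_eq[OF good_mu[OF assms]])
  then show ?thesis by (simp add: vec_eq_iff Avec_def)
qed

lemma lower_bound_half:
  fixes D :: "'a::real_normed_vector \<Rightarrow> 'a"
  assumes "norm (D w) \<le> norm w / 2"
  shows "norm w \<le> 2 * norm (w + D w)"
proof -
  have "norm w \<le> norm (w + D w) + norm (D w)"
    using norm_triangle_ineq4[of "w + D w" "D w"] by simp
  then show ?thesis using assms by linarith
qed




lemma coupled_field_eq: "coupled_field \<gamma> \<beta> H a x = Avec \<gamma> x + Nvec \<beta> x + a *\<^sub>R H x"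
proof -
  have "coupled_field \<gamma> \<beta> H a x $ k = (Avec \<gamma> x + Nvec \<beta> x + a *\<^sub>R H x) $ k" for k
    apply (simp only: coupled_field_def Avec_def Nvec_def vec_lambda_beta vector_add_component vector_scaleR_component)
    apply (simp add: scaleR_conv_of_real)
    done
  then show ?thesis by (simp add: vec_eq_iff)
qed

lemma srho_vec_bound:
  assumes "\<forall>k. \<forall>(c,fs)\<in>set (L k). length fs \<ge> 2" "norm u + norm w \<le> 1"
  shows "norm (\<chi> k. srho (L k) u w) \<le> (\<Sum>k\<in>UNIV. cwq (L k)) * (norm w)^2"
proof -
  have "norm (\<chi> k. srho (L k) u w) \<le> (\<Sum>k\<in>UNIV. cmod ((\<chi> k. srho (L k) u w) $ k))" by (rule norm_vec_le_sum)
  also have "\<dots> \<le> (\<Sum>k\<in>UNIV. cwq (L k) * (norm w)^2)"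
    using assms by (auto intro!: sum_mono srho_bound)
  finally show ?thesis by (simp add: sum_distrib_right)
qed

lemma cwq_nonneg: "cwq L \<ge> 0"
  by (induction L) (auto simp: cwq_def)

theorem mainTheorem1:
  fixes lam :: real and \<omega> :: "'n::finite \<Rightarrow> real" and \<beta> \<gamma> :: "'n \<Rightarrow> complex"
    and H :: "complex^'n \<Rightarrow> complex^'n"
  assumes gamma_def: "\<And>k. \<gamma> k = Complex lam (\<omega> k)"
    and gamma_nz: "\<And>k. \<gamma> k \<noteq> 0"
    and beta_nz: "\<And>k. \<beta> k \<noteq> 0"
    and H_smooth: "smooth_map H"
    and H_zero: "H 0 = 0"
    and DH_zero: "(H has_derivative (\<lambda>_. 0)) (at 0)"
    and nonres: "poly_map_nonres \<omega> (taylor_poly 5 H)"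
  shows "\<exists>\<epsilon>>0. \<exists>r>0. \<exists>C. \<exists>G :: 'n \<Rightarrow> complex^'n \<Rightarrow> complex.
           \<exists>h :: real \<Rightarrow> complex^'n \<Rightarrow> complex^'n.
           \<exists>Dh :: real \<Rightarrow> complex^'n \<Rightarrow> complex^'n \<Rightarrow> complex^'n.
           \<exists>R :: real \<Rightarrow> complex^'n \<Rightarrow> complex^'n.
     (\<forall>k. \<exists>c. is_zzbar_poly_repr c (G k) \<and>
              (\<forall>s t. c (s, t) \<noteq> 0 \<longrightarrow> monomial_degree s t \<ge> 3)) \<and>
     (\<forall>\<alpha>. \<bar>\<alpha>\<bar> < \<epsilon> \<longrightarrow>
        smooth_map (h \<alpha>) \<and> h \<alpha> 0 = 0 \<and> inj_on (h \<alpha>) (ball 0 r) \<and>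
        (\<forall>u\<in>ball 0 r.
           (h \<alpha> has_derivative Dh \<alpha> u) (at u) \<and> bij (Dh \<alpha> u) \<and>
           (\<forall>k. cmod (R \<alpha> u $ k) \<le> C * (\<bar>\<alpha>\<bar> * norm u ^ 6 + \<alpha>\<^sup>2 * norm u ^ 5 + \<bar>\<alpha>\<bar> ^ 3 * norm u ^ 4)) \<and>
           Dh \<alpha> u (\<chi> k. \<gamma> k * u $ k - \<beta> k * u $ k * complex_of_real ((cmod (u $ k))\<^sup>2)
                       - complex_of_real (\<alpha>\<^sup>2) * G k u + R \<alpha> u $ k)
             = coupled_field \<gamma> \<beta> H \<alpha> (h \<alpha> u)))"
proof -
  have Tex: "\<forall>k. \<exists>L. (\<forall>z. taylor_poly 5 H z $ k = sev L z) \<and> (\<forall>a gs. (a,gs) \<in> set L \<longrightarrow> sfreq \<omega> gs \<noteq> \<omega> k)"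
  proof
    fix k
    obtain c where c: "is_zzbar_poly_repr c (\<lambda>z. taylor_poly 5 H z $ k)" "\<forall>s t. c (s,t) \<noteq> 0 \<longrightarrow> monomial_nonres \<omega> k s t"
      using nonres unfolding poly_map_nonres_def by blast
    obtain L where L: "\<forall>z. taylor_poly 5 H z $ k = sev L z"
      "\<forall>a gs. (a,gs) \<in> set L \<longrightarrow> (\<exists>s t. c (s,t) \<noteq> 0 \<and> (\<forall>\<omega>. sfreq \<omega> gs = (\<Sum>j\<in>UNIV. real (s j) * \<omega> j) - (\<Sum>j\<in>UNIV. real (t j) * \<omega> j)))"
      using terms_of_repr[OF c(1)] by blast
    have "\<forall>a gs. (a,gs) \<in> set L \<longrightarrow> sfreq \<omega> gs \<noteq> \<omega> k"
    proof (intro allI impI)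
      fix a gs assume "(a,gs) \<in> set L"
      then obtain s t where st: "c (s,t) \<noteq> 0" "sfreq \<omega> gs = (\<Sum>j\<in>UNIV. real (s j) * \<omega> j) - (\<Sum>j\<in>UNIV. real (t j) * \<omega> j)"
        using L(2) by blast
      then show "sfreq \<omega> gs \<noteq> \<omega> k" using c(2) unfolding monomial_nonres_def by auto
    qed
    then show "\<exists>L. (\<forall>z. taylor_poly 5 H z $ k = sev L z) \<and> (\<forall>a gs. (a,gs) \<in> set L \<longrightarrow> sfreq \<omega> gs \<noteq> \<omega> k)"
      using L(1) by blast
  qed
  then obtain Tf where Tf1: "\<And>k z. taylor_poly 5 H z $ k = sev (Tf k) z"
    and Tf2: "\<And>k a gs. (a,gs) \<in> set (Tf k) \<Longrightarrow> sfreq \<omega> gs \<noteq> \<omega> k"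
    by metis
  have Tev: "taylor_poly 5 H z = ev Tf z" for z by (simp add: vec_eq_iff Tf1)
  obtain ME where ME0: "ME \<ge> 0" and ME: "\<And>x. norm x \<le> 1 \<Longrightarrow> norm (H x - ev Tf x) \<le> ME * norm x ^ 6"
    using taylor_bound[OF H_smooth] by (auto simp: Tev)
  define PT where "PT = (\<lambda>(a::complex, gs::'n fac list). 2 \<le> length gs)"
  define T0 where "T0 = (\<lambda>k. filter PT (Tf k))"
  define Tl where "Tl = (\<lambda>k. filter (\<lambda>x. \<not> PT x) (Tf k))"
  have Tsplit: "ev Tf x = ev T0 x + ev Tl x" for x
    unfolding T0_def Tl_def by (simp only: vec_eq_iff ev_nth vector_add_component sev_filter[of "Tf _" x PT] simp_thms)
  have T0good: "good \<omega> 2 T0" unfolding good_def T0_def PT_def using Tf2 by auto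
  have T0len: "\<forall>k. \<forall>(a,gs)\<in>set (T0 k). 2 \<le> length gs" using good_len[OF T0good] .
  have Tllen: "\<forall>k. \<forall>(a,gs)\<in>set (Tl k). length gs \<le> 1" by (auto simp: Tl_def PT_def)
  define CT where "CT = (\<Sum>k\<in>UNIV. cw (T0 k))"
  have T0b: "norm (ev T0 x) \<le> CT * norm x ^ 2" if "norm x \<le> 1" for x
    unfolding CT_def by (rule ev_bound[OF T0len that])
  have Tl0: "ev Tl x = 0" for x
  proof (rule low_vanish[OF Tllen])
    have E0: "((\<lambda>x. H x - ev Tf x) has_derivative (\<lambda>_. 0)) (at 0)"
    proof (rule o2_has_derivative)
      fix x :: "complex^'n" assume x: "norm x \<le> 1"
      have "norm x ^ 6 \<le> norm x ^ 2" using x by (intro power_decreasing) auto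
      then have "ME * norm x ^ 6 \<le> ME * norm x ^ 2" using ME0 by (rule mult_left_mono)
      then show "norm (H x - ev Tf x) \<le> ME * norm x ^ 2" using ME[OF x] by linarith
    qed
    have T0d: "(ev T0 has_derivative (\<lambda>_. 0)) (at 0)" by (rule o2_has_derivative[OF T0b])
    have eq: "ev Tl = (\<lambda>x. H x - (H x - ev Tf x) - ev T0 x)" using Tsplit by (auto simp: fun_eq_iff)
    have "((\<lambda>x. H x - (H x - ev Tf x) - ev T0 x) has_derivative (\<lambda>_. 0 - 0 - 0)) (at 0)"
      by (intro has_derivative_diff DH_zero E0 T0d)
    then show "(ev Tl has_derivative (\<lambda>_. 0)) (at 0)" by (simp add: eq)
    have "norm (H 0 - ev Tf 0) \<le> 0" using ME[of 0] by simp
    moreover have "norm (ev T0 0) \<le> 0" using T0b[of 0] by simp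
    ultimately show "ev Tl 0 = 0" using Tsplit[of 0] H_zero by simp
  qed
  have TfT0: "ev Tf x = ev T0 x" for x using Tsplit Tl0 by simp

  define P1 where "P1 = (\<lambda>k. solveL \<gamma> k (T0 k))"
  define W where "W = lnt \<beta> P1"
  define PW where "PW = (\<lambda>(a::complex, gs::'n fac list). length gs \<le> 5)"
  define Wlo where "Wlo = (\<lambda>k. filter PW (W k))"
  define Whi where "Whi = (\<lambda>k. filter (\<lambda>x. \<not> PW x) (W k))"
  define P2 where "P2 = (\<lambda>k. solveL \<gamma> k (negL (Wlo k)))"
  define P where "P = (\<lambda>k. P1 k @ P2 k)"
  have gP1: "good \<omega> 2 P1" unfolding P1_def using good_solveL[OF T0good] .
  have gW: "good \<omega> 4 W" unfolding W_def using good_lnt[OF gP1] by simp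
  have gWlo: "good \<omega> 4 Wlo" unfolding Wlo_def by (rule good_filter[OF gW])
  have gnW: "good \<omega> 4 (\<lambda>k. negL (Wlo k))" by (rule good_negL[OF gWlo])
  have gP2: "good \<omega> 4 P2" unfolding P2_def using good_solveL[OF gnW] .
  have gP: "good \<omega> 2 P" unfolding P_def by (rule good_append[OF gP1 good_mono[OF gP2]]) simp
  have Plen: "\<forall>k. \<forall>(a,gs)\<in>set (P k). 2 \<le> length gs" by (rule good_len[OF gP])
  have gL2: "good \<omega> 6 (lnt \<beta> P2)" using good_lnt[OF gP2] by simp
  have Whilen: "\<forall>k. \<forall>(a,gs)\<in>set (Whi k). 6 \<le> length gs" by (auto simp: Whi_def PW_def)
  have hom: "Dev P u (Avec \<gamma> u) = Avec \<gamma> (ev P u) + (ev T0 u - ev Wlo u)" for u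
  proof -
    have a: "Dev P1 u (Avec \<gamma> u) - Avec \<gamma> (ev P1 u) = ev T0 u" unfolding P1_def using homol[OF gamma_def T0good] .
    have b: "Dev P2 u (Avec \<gamma> u) - Avec \<gamma> (ev P2 u) = ev (\<lambda>k. negL (Wlo k)) u" unfolding P2_def using homol[OF gamma_def gnW] .
    have c: "ev (\<lambda>k. negL (Wlo k)) u = - ev Wlo u" by (simp add: vec_eq_iff)
    have "Dev P u (Avec \<gamma> u) - Avec \<gamma> (ev P u) = (Dev P1 u (Avec \<gamma> u) - Avec \<gamma> (ev P1 u)) + (Dev P2 u (Avec \<gamma> u) - Avec \<gamma> (ev P2 u))"
      unfolding P_def Dev_append ev_append Avec_add by simp
    then show ?thesis using a b c by (simp add: diff_eq_eq)
  qed
  have nbr: "Dev P u (Nvec \<beta> u) = DNvec \<beta> u (ev P u) + (ev W u + ev (lnt \<beta> P2) u)" for u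
  proof -
    have "Dev P u (Nvec \<beta> u) - DNvec \<beta> u (ev P u) = (Dev P1 u (Nvec \<beta> u) - DNvec \<beta> u (ev P1 u)) + (Dev P2 u (Nvec \<beta> u) - DNvec \<beta> u (ev P2 u))"
      unfolding P_def Dev_append ev_append DNvec_add by simp
    then have "ev (lnt \<beta> P) u = ev (lnt \<beta> P1) u + ev (lnt \<beta> P2) u" unfolding ev_lnt .
    moreover have "Dev P u (Nvec \<beta> u) = DNvec \<beta> u (ev P u) + ev (lnt \<beta> P) u"
      using ev_lnt[of P u \<beta>] by (simp add: diff_eq_eq add.commute)
    ultimately show ?thesis unfolding W_def by simp
  qed
  have Wsplit: "ev W u = ev Wlo u + ev Whi u" for u
    unfolding Wlo_def Whi_def by (simp only: vec_eq_iff ev_nth vector_add_component sev_filter[of "W _" u PW] simp_thms)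
  define Brk where "Brk = (\<lambda>u. - ev Whi u - ev (lnt \<beta> P2) u)"
  have brk: "Dev P u (Avec \<gamma> u + Nvec \<beta> u) = Avec \<gamma> (ev P u) + DNvec \<beta> u (ev P u) + ev Tf u - Brk u" for u
  proof -
    have lin: "Dev P u (Avec \<gamma> u + Nvec \<beta> u) = Dev P u (Avec \<gamma> u) + Dev P u (Nvec \<beta> u)"
      using linear_Dev[of P u] by (simp add: linear_add)
    show ?thesis by (simp add: lin hom nbr Wsplit TfT0 Brk_def algebra_simps)
  qed
  define Cb where "Cb = (\<Sum>k\<in>UNIV. cw (Whi k)) + (\<Sum>k\<in>UNIV. cw (lnt \<beta> P2 k))"
  have Brkb: "norm (Brk u) \<le> Cb * norm u ^ 6" if "norm u \<le> 1" for u
  proof -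
    have "norm (Brk u) \<le> norm (ev Whi u) + norm (ev (lnt \<beta> P2) u)"
      unfolding Brk_def by (metis minus_diff_eq norm_minus_cancel norm_triangle_ineq4 diff_minus_eq_add uminus_add_conv_diff)
    also have "\<dots> \<le> (\<Sum>k\<in>UNIV. cw (Whi k)) * norm u ^ 6 + (\<Sum>k\<in>UNIV. cw (lnt \<beta> P2 k)) * norm u ^ 6"
      by (intro add_mono ev_bound Whilen good_len[OF gL2] that)
    finally show ?thesis by (simp add: Cb_def algebra_simps)
  qed

  define T1 where "T1 = (\<lambda>k. concat (map (\<lambda>(c,fs). map (\<lambda>(c',gs). (c * c', gs)) (dpt fs P)) (T0 k)))"
  define PG where "PG = (\<lambda>(a::complex, gs::'n fac list). length gs \<le> 4)"
  define Gl where "Gl = (\<lambda>k. negL (filter PG (T1 k)))"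
  define T1h where "T1h = (\<lambda>k. filter (\<lambda>x. \<not> PG x) (T1 k))"
  define G where "G = (\<lambda>k u. sev (Gl k) u)"
  have T1len: "\<forall>k. \<forall>(a,gs)\<in>set (T1 k). 3 \<le> length gs"
  proof (intro allI ballI, clarify)
    fix k a gs assume "(a,gs) \<in> set (T1 k)"
    then obtain c fs c' where m: "(c,fs) \<in> set (T0 k)" "(c',gs) \<in> set (dpt fs P)" by (auto simp: T1_def)
    have "length gs \<ge> length fs + 1" by (rule dpt_len[OF Plen m(2)])
    moreover have "length fs \<ge> 2" using T0len m(1) by blast
    ultimately show "3 \<le> length gs" by simp
  qed
  have Gllen: "\<forall>k. \<forall>(a,gs)\<in>set (Gl k). 3 \<le> length gs"
    using T1len by (fastforce simp: Gl_def negL_def)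
  have T1hlen: "\<forall>k. \<forall>(a,gs)\<in>set (T1h k). 5 \<le> length gs"
    by (auto simp: T1h_def PG_def)
  have DevT0: "Dev T0 u (ev P u) = ev T1 u" for u
    by (simp add: vec_eq_iff T1_def sDev_eq_sev_gen[OF Dmono_ev])
  have T1G: "ev T1 u = ev T1h u - ev Gl u" for u
  proof -
    have "sev (T1 k) u = sev (filter PG (T1 k)) u + sev (filter (\<lambda>x. \<not> PG x) (T1 k)) u" for k
      by (rule sev_filter)
    then show ?thesis by (simp add: vec_eq_iff T1h_def Gl_def)
  qed
  have Gvec: "(\<chi> k. G k u) = ev Gl u" for u by (simp add: G_def ev_def)

  define Cp where "Cp = (\<Sum>k\<in>UNIV. cw (P k))"
  define Cd where "Cd = (\<Sum>k\<in>UNIV. cwl (P k))"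
  define Cg where "Cg = (\<Sum>k\<in>UNIV. cw (Gl k))"
  define C1 where "C1 = (\<Sum>k\<in>UNIV. cw (T1h k))"
  define Cq where "Cq = (\<Sum>k\<in>UNIV. cwq (T0 k))"
  define Bs where "Bs = (\<Sum>k\<in>UNIV. cmod (\<beta> k))"
  have Cp0: "Cp \<ge> 0" unfolding Cp_def by (intro sum_nonneg cw_nonneg)
  have Cd0: "Cd \<ge> 0" unfolding Cd_def by (intro sum_nonneg cwl_nonneg)
  have Cg0: "Cg \<ge> 0" unfolding Cg_def by (intro sum_nonneg cw_nonneg)
  have C10: "C1 \<ge> 0" unfolding C1_def by (intro sum_nonneg cw_nonneg)
  have Cq0: "Cq \<ge> 0" unfolding Cq_def by (intro sum_nonneg cwq_nonneg)
  have Bs0: "Bs \<ge> 0" unfolding Bs_def by (intro sum_nonneg) auto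
  have Cb0: "Cb \<ge> 0" unfolding Cb_def by (intro add_nonneg_nonneg sum_nonneg cw_nonneg)
  have Pb: "norm (ev P u) \<le> Cp * norm u ^ 2" if "norm u \<le> 1" for u
    unfolding Cp_def by (rule ev_bound[OF Plen that])
  have Db: "norm (Dev P u w) \<le> Cd * norm u * norm w" if "norm u \<le> 1" for u w
    unfolding Cd_def by (rule Dev_bound[OF Plen that])
  have Gb: "norm (ev Gl u) \<le> Cg * norm u ^ 3" if "norm u \<le> 1" for u
    unfolding Cg_def by (rule ev_bound[OF Gllen that])
  have T1hb: "norm (ev T1h u) \<le> C1 * norm u ^ 5" if "norm u \<le> 1" for u
    unfolding C1_def by (rule ev_bound[OF T1hlen that])
  define \<epsilon> where "\<epsilon> = 1 / (2 * Cd + Cp + 1)"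
  have \<epsilon>0: "\<epsilon> > 0" using Cd0 Cp0 by (simp add: \<epsilon>_def)
  have \<epsilon>d: "\<epsilon> * Cd \<le> 1/2" and \<epsilon>p: "\<epsilon> * Cp \<le> 1" and \<epsilon>1: "\<epsilon> \<le> 1"
    using Cd0 Cp0 by (auto simp: \<epsilon>_def field_simps)
  define K where "K = Cb + 64 * ME + 3 * Bs * Cp^2 + C1 + Cq * Cp^2 + Bs * Cp^3 + Cd * Cg"
  define h where "h = (\<lambda>(a::real) u. u + a *\<^sub>R ev P u)"
  define Dh where "Dh = (\<lambda>(a::real) u w. w + a *\<^sub>R Dev P u w)"
  define X0 where "X0 = (\<lambda>(a::real) u. Avec \<gamma> u + Nvec \<beta> u - (a\<^sup>2) *\<^sub>R ev Gl u)"
  define R where "R = (\<lambda>(a::real) u. inv (Dh a u) (coupled_field \<gamma> \<beta> H a (h a u)) - X0 a u)"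
  show ?thesis
  proof (rule exI[of _ \<epsilon>], rule conjI[OF \<epsilon>0], rule exI[of _ "1/2::real"], rule conjI, simp,
      rule exI[of _ "2 * K"], rule exI[of _ G], rule exI[of _ h], rule exI[of _ Dh], rule exI[of _ R],
      intro conjI allI impI ballI)
    fix k
    show "\<exists>c. is_zzbar_poly_repr c (G k) \<and> (\<forall>s t. c (s, t) \<noteq> 0 \<longrightarrow> 3 \<le> monomial_degree s t)"
    proof (intro exI[of _ "repc (Gl k)"] conjI allI impI)
      show "is_zzbar_poly_repr (repc (Gl k)) (G k)"
        using repc_repr[of "Gl k"] by (simp add: G_def[abs_def])
    next
      fix s t assume "repc (Gl k) (s,t) \<noteq> 0"
      then show "3 \<le> monomial_degree s t" using repc_degree Gllen by blast
    qed
  next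
    fix a :: real assume a: "\<bar>a\<bar> < \<epsilon>"
    have ad: "\<bar>a\<bar> * Cd \<le> 1/2" using a \<epsilon>d Cd0 by (smt (verit) mult_right_mono)
    have ap: "\<bar>a\<bar> * Cp \<le> 1" using a \<epsilon>p Cp0 by (smt (verit) mult_right_mono)
    have a1: "\<bar>a\<bar> \<le> 1" using a \<epsilon>1 by simp
    show "smooth_map (h a)"
    proof -
      define hQ where "hQ = (\<lambda>k. (1::complex, [(k,False)]) # map (\<lambda>(c,gs). (of_real a * c, gs)) (P k))"
      have "h a = ev hQ"
      proof
        fix u
        have "h a u $ k = ev hQ u $ k" for k
          unfolding h_def hQ_def vector_add_component vector_scaleR_component ev_nth
          by (simp add: sev_map_scale lin_def scaleR_conv_of_real)
        then show "h a u = ev hQ u" by (simp add: vec_eq_iff)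
      qed
      then show ?thesis using smooth_ev by simp
    qed
    show "h a 0 = 0"
      using Pb[of 0] by (simp add: h_def)
    show "inj_on (h a) (ball 0 (1/2))"
    proof (rule inj_onI)
      fix u v assume u: "u \<in> ball 0 (1/2)" and v: "v \<in> ball 0 (1/2)" and e: "h a u = h a v"
      have lip: "norm (ev P v - ev P u) \<le> Cd * norm (v - u)"
      proof (rule differentiable_bound[of "cball 0 1"])
        show "convex (cball (0::complex^'n) 1)" by simp
        show "\<And>x. x \<in> cball 0 1 \<Longrightarrow> (ev P has_derivative Dev P x) (at x within cball 0 1)"
          by (rule ev_has_derivative)
        show "onorm (Dev P x) \<le> Cd" if "x \<in> cball 0 1" for x
        proof (rule onorm_le)
          fix w
          have "norm (Dev P x w) \<le> Cd * norm x * norm w" using that by (intro Db) simp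
          also have "\<dots> \<le> Cd * 1 * norm w" using that Cd0 by (intro mult_right_mono mult_left_mono) auto
          finally show "norm (Dev P x w) \<le> Cd * norm w" by simp
        qed
        show "v \<in> cball 0 1" "u \<in> cball 0 1" using u v by auto
      qed
      have "u - v = a *\<^sub>R (ev P v - ev P u)" using e by (simp add: h_def algebra_simps)
      then have "norm (u - v) \<le> \<bar>a\<bar> * (Cd * norm (v - u))"
        using lip by (simp add: mult_left_mono)
      also have "\<dots> = (\<bar>a\<bar> * Cd) * norm (u - v)" by (simp add: norm_minus_commute)
      also have "\<dots> \<le> (1/2) * norm (u - v)" using ad by (intro mult_right_mono) auto
      finally have "norm (u - v) \<le> 0" by simp
      then show "u = v" by simp
    qed
    fix u :: "complex^'n" assume u: "u \<in> ball 0 (1/2)"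
    have nu: "norm u < 1/2" using u by simp
    have nu1: "norm u \<le> 1" using nu by simp
    show hd: "(h a has_derivative Dh a u) (at u)"
      unfolding h_def Dh_def
      by (intro has_derivative_add has_derivative_ident has_derivative_scaleR_right ev_has_derivative)
    have linD: "linear (Dh a u)" using has_derivative_linear[OF hd] .
    have half: "norm (a *\<^sub>R Dev P u w) \<le> norm w / 2" for w
    proof -
      have "norm (a *\<^sub>R Dev P u w) \<le> \<bar>a\<bar> * (Cd * norm u * norm w)" using Db[OF nu1] by (simp add: mult_left_mono)
      also have "\<dots> \<le> \<bar>a\<bar> * (Cd * 1 * norm w)" using nu1 Cd0 by (intro mult_left_mono mult_right_mono) auto
      also have "\<dots> = (\<bar>a\<bar> * Cd) * norm w" by simp
      also have "\<dots> \<le> (1/2) * norm w" using ad by (intro mult_right_mono) auto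
      finally show ?thesis by simp
    qed
    have lowD: "norm w \<le> 2 * norm (Dh a u w)" for w
      unfolding Dh_def using lower_bound_half[of "\<lambda>w. a *\<^sub>R Dev P u w" w] half by simp
    have injD: "inj (Dh a u)"
    proof (rule injI)
      fix x y assume "Dh a u x = Dh a u y"
      then have "Dh a u (x - y) = 0" using linear_diff[OF linD] by simp
      then show "x = y" using lowD[of "x - y"] by simp
    qed
    show bijD: "bij (Dh a u)"
      using injD linear_injective_imp_surjective[OF linD injD] by (simp add: bij_def)
    define F where "F = coupled_field \<gamma> \<beta> H a (h a u)"
    define Y where "Y = F - Dh a u (X0 a u)"
    have DR: "Dh a u (R a u) = Y"
    proof -
      have "Dh a u (inv (Dh a u) F) = F" using bijD by (simp add: bij_is_surj surj_f_inv_f)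
      then show ?thesis unfolding R_def Y_def F_def[symmetric] using linear_diff[OF linD] by simp
    qed
    have RY: "norm (R a u) \<le> 2 * norm Y" using lowD[of "R a u"] DR by simp
    define p where "p = ev P u"
    define w where "w = a *\<^sub>R p"
    define E where "E = (\<lambda>x. H x - ev Tf x)"
    define rhov where "rhov = (\<chi> k. srho (T0 k) u w)"
    have np: "norm p \<le> Cp * norm u ^ 2" unfolding p_def by (rule Pb[OF nu1])
    have nw: "norm w \<le> norm u ^ 2"
    proof -
      have "norm w = \<bar>a\<bar> * norm p" by (simp add: w_def)
      also have "\<dots> \<le> \<bar>a\<bar> * (Cp * norm u ^ 2)" using np by (intro mult_left_mono) auto
      also have "\<dots> = (\<bar>a\<bar> * Cp) * norm u ^ 2" by simp
      also have "\<dots> \<le> 1 * norm u ^ 2" using ap by (intro mult_right_mono) auto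
      finally show ?thesis by simp
    qed
    have nw2: "norm w \<le> norm u" using nw nu1 by (smt (verit) power2_eq_square mult_left_le_one_le norm_ge_zero)
    have nuw: "norm u + norm w \<le> 1" using nw2 nu by simp
    have nuw2: "norm (u + w) \<le> 2 * norm u" using nw2 norm_triangle_ineq[of u w] by simp
    have Y_eq: "Y = a *\<^sub>R Brk u + a *\<^sub>R E (u + w) + (a^2) *\<^sub>R (N2 \<beta> u p + ev T1h u) + a *\<^sub>R rhov
        + (a^3) *\<^sub>R (Nvec \<beta> p + Dev P u (ev Gl u))"
    proof -
      have H1: "H (u + w) = E (u + w) + ev T0 (u + w)" by (simp add: E_def TfT0)
      have T01: "ev T0 (u + w) = ev T0 u + Dev T0 u w + rhov"
        by (simp add: vec_eq_iff rhov_def sev_expand)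
      have T02: "Dev T0 u w = a *\<^sub>R ev T1 u"
        unfolding w_def p_def using linear_Dev[of T0 u] DevT0[of u] by (simp add: linear_scale)
      have F1: "F = Avec \<gamma> u + a *\<^sub>R Avec \<gamma> p + (Nvec \<beta> u + a *\<^sub>R DNvec \<beta> u p + (a^2) *\<^sub>R N2 \<beta> u p + (a^3) *\<^sub>R Nvec \<beta> p)
          + a *\<^sub>R (E (u + w) + (ev T0 u + a *\<^sub>R (ev T1h u - ev Gl u) + rhov))"
        unfolding F_def coupled_field_eq h_def p_def[symmetric] w_def[symmetric] H1 T01 T02 T1G
        by (simp add: w_def Avec_add Avec_scaleR Nvec_expand)
      have lD: "Dev P u (Avec \<gamma> u + Nvec \<beta> u - (a\<^sup>2) *\<^sub>R ev Gl u) = Dev P u (Avec \<gamma> u + Nvec \<beta> u) - (a\<^sup>2) *\<^sub>R Dev P u (ev Gl u)"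
        using linear_Dev[of P u] by (simp add: linear_diff linear_scale)
      have D1: "Dh a u (X0 a u) = Avec \<gamma> u + Nvec \<beta> u - (a\<^sup>2) *\<^sub>R ev Gl u
          + a *\<^sub>R (Avec \<gamma> p + DNvec \<beta> u p + ev T0 u - Brk u - (a\<^sup>2) *\<^sub>R Dev P u (ev Gl u))"
        unfolding Dh_def X0_def lD brk p_def TfT0 ..
      show ?thesis unfolding Y_def F1 D1
        by (simp add: algebra_simps power2_eq_square power3_eq_cube)
    qed
    define A1 where "A1 = \<bar>a\<bar> * norm u ^ 6"
    define A2 where "A2 = a\<^sup>2 * norm u ^ 5"
    define A3 where "A3 = \<bar>a\<bar> ^ 3 * norm u ^ 4"
    have A10: "A1 \<ge> 0" and A20: "A2 \<ge> 0" and A30: "A3 \<ge> 0" by (simp_all add: A1_def A2_def A3_def)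
    have b1: "norm (a *\<^sub>R Brk u) \<le> Cb * A1"
    proof -
      have "norm (a *\<^sub>R Brk u) = \<bar>a\<bar> * norm (Brk u)" by simp
      also have "\<dots> \<le> \<bar>a\<bar> * (Cb * norm u ^ 6)" using Brkb[OF nu1] by (intro mult_left_mono) auto
      also have "\<dots> = Cb * A1" by (simp add: A1_def)
      finally show ?thesis .
    qed
    have b2: "norm (a *\<^sub>R E (u + w)) \<le> (64 * ME) * A1"
    proof -
      have "norm (u + w) \<le> 1" using nuw norm_triangle_ineq[of u w] by simp
      then have "norm (E (u + w)) \<le> ME * norm (u + w) ^ 6" unfolding E_def by (rule ME)
      also have "\<dots> \<le> ME * (2 * norm u) ^ 6" using nuw2 ME0 by (intro mult_left_mono power_mono) auto
      finally have e6: "norm (E (u + w)) \<le> 64 * ME * norm u ^ 6" by (simp add: power_mult_distrib)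
      have "norm (a *\<^sub>R E (u + w)) = \<bar>a\<bar> * norm (E (u + w))" by simp
      also have "\<dots> \<le> \<bar>a\<bar> * (64 * ME * norm u ^ 6)" using e6 by (intro mult_left_mono) auto
      also have "\<dots> = (64 * ME) * A1" by (simp add: A1_def)
      finally show ?thesis .
    qed
    have b3: "norm ((a^2) *\<^sub>R (N2 \<beta> u p + ev T1h u)) \<le> (3 * Bs * Cp^2 + C1) * A2"
    proof -
      have "norm (N2 \<beta> u p) \<le> 3 * Bs * norm u * (norm p)^2" unfolding Bs_def by (rule N2_bound)
      also have "\<dots> \<le> 3 * Bs * norm u * (Cp * norm u ^ 2)^2"
        using np Bs0 by (intro mult_left_mono power_mono) auto
      also have "\<dots> = 3 * Bs * Cp^2 * norm u ^ 5" by (simp add: power_mult_distrib algebra_simps eval_nat_numeral)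
      finally have "norm (N2 \<beta> u p + ev T1h u) \<le> 3 * Bs * Cp^2 * norm u ^ 5 + C1 * norm u ^ 5"
        using T1hb[OF nu1] norm_triangle_ineq[of "N2 \<beta> u p" "ev T1h u"] by linarith
      then have e5: "norm (N2 \<beta> u p + ev T1h u) \<le> (3 * Bs * Cp^2 + C1) * norm u ^ 5" by (simp add: algebra_simps)
      have "norm ((a^2) *\<^sub>R (N2 \<beta> u p + ev T1h u)) = a^2 * norm (N2 \<beta> u p + ev T1h u)" by simp
      also have "\<dots> \<le> a^2 * ((3 * Bs * Cp^2 + C1) * norm u ^ 5)" using e5 by (intro mult_left_mono) auto
      also have "\<dots> = (3 * Bs * Cp^2 + C1) * A2" by (simp add: A2_def)
      finally show ?thesis .
    qed
    have b4: "norm (a *\<^sub>R rhov) \<le> (Cq * Cp^2) * A3"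
    proof -
      have "norm rhov \<le> Cq * (norm w)^2" unfolding rhov_def Cq_def by (rule srho_vec_bound[OF T0len nuw])
      also have "(norm w)^2 = a^2 * (norm p)^2" by (simp add: w_def power_mult_distrib)
      also have "Cq * (a^2 * (norm p)^2) \<le> Cq * (a^2 * (Cp * norm u ^ 2)^2)"
        using np Cq0 by (intro mult_left_mono power_mono) auto
      finally have "norm rhov \<le> Cq * Cp^2 * a^2 * norm u ^ 4" by (simp add: power_mult_distrib algebra_simps eval_nat_numeral)
      then have "norm (a *\<^sub>R rhov) \<le> \<bar>a\<bar> * (Cq * Cp^2 * a^2 * norm u ^ 4)"
        by (simp only: norm_scaleR) (intro mult_left_mono, auto)
      also have "\<dots> = (Cq * Cp^2) * A3" by (simp add: A3_def power2_eq_square power3_eq_cube abs_mult algebra_simps)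
      finally show ?thesis .
    qed
    have b5: "norm ((a^3) *\<^sub>R (Nvec \<beta> p + Dev P u (ev Gl u))) \<le> (Bs * Cp^3 + Cd * Cg) * A3"
    proof -
      have "norm (Nvec \<beta> p) \<le> Bs * (norm p)^3" unfolding Bs_def by (rule Nvec_bound)
      also have "\<dots> \<le> Bs * (Cp * norm u ^ 2)^3" using np Bs0 by (intro mult_left_mono power_mono) auto
      also have "\<dots> = Bs * Cp^3 * norm u ^ 6" by (simp add: power_mult_distrib algebra_simps eval_nat_numeral)
      also have "\<dots> \<le> Bs * Cp^3 * norm u ^ 4"
        using nu1 Bs0 Cp0 by (intro mult_left_mono power_decreasing) auto
      finally have n1: "norm (Nvec \<beta> p) \<le> Bs * Cp^3 * norm u ^ 4" .
      have "norm (Dev P u (ev Gl u)) \<le> Cd * norm u * norm (ev Gl u)" by (rule Db[OF nu1])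
      also have "\<dots> \<le> Cd * norm u * (Cg * norm u ^ 3)" using Gb[OF nu1] Cd0 by (intro mult_left_mono) auto
      also have "\<dots> = Cd * Cg * norm u ^ 4" by (simp add: algebra_simps eval_nat_numeral)
      finally have n2: "norm (Dev P u (ev Gl u)) \<le> Cd * Cg * norm u ^ 4" .
      have "norm (Nvec \<beta> p + Dev P u (ev Gl u)) \<le> (Bs * Cp^3 + Cd * Cg) * norm u ^ 4"
        using n1 n2 norm_triangle_ineq[of "Nvec \<beta> p" "Dev P u (ev Gl u)"] by (simp add: algebra_simps)
      then have "norm ((a^3) *\<^sub>R (Nvec \<beta> p + Dev P u (ev Gl u))) \<le> \<bar>a^3\<bar> * ((Bs * Cp^3 + Cd * Cg) * norm u ^ 4)"
        by (simp only: norm_scaleR) (intro mult_left_mono, auto)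
      also have "\<dots> = (Bs * Cp^3 + Cd * Cg) * A3" by (simp add: A3_def power_abs)
      finally show ?thesis .
    qed
    have "norm Y \<le> Cb * A1 + (64 * ME) * A1 + (3 * Bs * Cp^2 + C1) * A2 + (Cq * Cp^2) * A3 + (Bs * Cp^3 + Cd * Cg) * A3"
      unfolding Y_eq using b1 b2 b3 b4 b5
      by (smt (verit) norm_triangle_ineq)
    also have "\<dots> \<le> K * (A1 + A2 + A3)"
    proof -
      have k1: "Cb + 64 * ME \<le> K" and k2: "3 * Bs * Cp^2 + C1 \<le> K" and k3: "Cq * Cp^2 + (Bs * Cp^3 + Cd * Cg) \<le> K"
        using Cb0 ME0 Bs0 Cp0 C10 Cq0 Cd0 Cg0 by (auto simp: K_def intro!: add_nonneg_nonneg mult_nonneg_nonneg)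
      have "(Cb + 64 * ME) * A1 \<le> K * A1" using k1 A10 by (rule mult_right_mono)
      moreover have "(3 * Bs * Cp^2 + C1) * A2 \<le> K * A2" using k2 A20 by (rule mult_right_mono)
      moreover have "(Cq * Cp^2 + (Bs * Cp^3 + Cd * Cg)) * A3 \<le> K * A3" using k3 A30 by (rule mult_right_mono)
      ultimately show ?thesis by (simp add: algebra_simps)
    qed
    finally have nY: "norm Y \<le> K * (A1 + A2 + A3)" .
    show "cmod (R a u $ k) \<le> 2 * K * (\<bar>a\<bar> * norm u ^ 6 + a\<^sup>2 * norm u ^ 5 + \<bar>a\<bar> ^ 3 * norm u ^ 4)" for k
    proof -
      have "cmod (R a u $ k) \<le> norm (R a u)" by (rule Finite_Cartesian_Product.norm_nth_le)
      also have "\<dots> \<le> 2 * norm Y" by (rule RY)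
      also have "\<dots> \<le> 2 * (K * (A1 + A2 + A3))" using nY by simp
      finally show ?thesis by (simp add: A1_def A2_def A3_def)
    qed
    show "Dh a u (\<chi> k. \<gamma> k * u $ k - \<beta> k * u $ k * complex_of_real ((cmod (u $ k))\<^sup>2)
                       - complex_of_real (a\<^sup>2) * G k u + R a u $ k)
             = coupled_field \<gamma> \<beta> H a (h a u)"
    proof -
      have "(\<chi> k. \<gamma> k * u $ k - \<beta> k * u $ k * complex_of_real ((cmod (u $ k))\<^sup>2)
                       - complex_of_real (a\<^sup>2) * G k u + R a u $ k) = X0 a u + R a u"
      proof -
        have "(X0 a u + R a u) $ k = \<gamma> k * u $ k - \<beta> k * u $ k * complex_of_real ((cmod (u $ k))\<^sup>2)
                       - complex_of_real (a\<^sup>2) * G k u + R a u $ k" for k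
          apply (simp only: X0_def vector_add_component vector_minus_component vector_scaleR_component Avec_def Nvec_def vec_lambda_beta ev_nth G_def)
          apply (simp add: scaleR_conv_of_real)
          done
        then show ?thesis by (simp add: vec_eq_iff)
      qed
      also have "X0 a u + R a u = inv (Dh a u) F" by (simp add: R_def F_def)
      finally show ?thesis using bijD by (simp add: F_def bij_is_surj surj_f_inv_f)
    qed
  qed
qed


end
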